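(* Let $n\ge 2$. For a prime $p$, let $X_p$ be the set of matrices in $\mathrm{SL}(n,\mathbb{F}_p)$ whose characteristic polynomial has a monic factor over $\mathbb{F}_p$ of degree between $1$ and $n-1$ with constant term $1$. Then $|X_p|/|\mathrm{SL}(n,\mathbb{F}_p)|\to 0$ as $p\to\infty$. *)

theory Defs
  imports "Jordan_Normal_Form.Char_Poly" "HOL-Number_Theory.Cong" "HOL-Computational_Algebra.Primes"
begin

text \<open>The field F_p is represented by the residues {0..<p} in int; a matrix over F_p
  is an n x n integer matrix with all entries in {0..<p}. Determinants and characteristic
  polynomials over F_p are the integer ones reduced mod p.\<close>

definition Fp_mats :: "nat \<Rightarrow> nat \<Rightarrow> int mat set" where
  "Fp_mats n p = {A \<in> carrier_mat n n. \<forall>i<n. \<forall>j<n. A $$ (i, j) \<in> {0..<int p}}"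

definition SL_Fp :: "nat \<Rightarrow> nat \<Rightarrow> int mat set" where
  "SL_Fp n p = {A \<in> Fp_mats n p. [det A = 1] (mod int p)}"

definition dvd_mod_p :: "nat \<Rightarrow> int poly \<Rightarrow> int poly \<Rightarrow> bool" where
  "dvd_mod_p p q f = (\<exists>r :: int poly. \<forall>i. [coeff f i = coeff (q * r) i] (mod int p))"

definition X_p :: "nat \<Rightarrow> nat \<Rightarrow> int mat set" where
  "X_p n p = {A \<in> SL_Fp n p. \<exists>q :: int poly. lead_coeff q = 1 \<and> 1 \<le> degree q \<and> degree q \<le> n - 1
       \<and> coeff q 0 = 1 \<and> dvd_mod_p p q (char_poly A)}"

end

theory Submission
  imports Defs
begin

definition box :: "nat \<Rightarrow> nat \<Rightarrow> (nat \<Rightarrow> int) set" where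
  "box m p = PiE {..<m} (\<lambda>_. {0..<int p})"

lemma finite_box[simp]: "finite (box m p)" by (simp add: box_def finite_PiE)
lemma card_box: "card (box m p) = p ^ m" by (simp add: box_def card_PiE)

lemma box_upd: "g \<in> box m p \<Longrightarrow> t \<in> {0..<int p} \<Longrightarrow> g(m:=t) \<in> box (Suc m) p"
  unfolding box_def by (auto simp: PiE_iff extensional_def)

lemma box_undef: "g \<in> box m p \<Longrightarrow> g m = undefined"
  unfolding box_def by (auto simp: PiE_iff extensional_def)

lemma box_restrict: "x \<in> box (Suc m) p \<Longrightarrow> x(m:=undefined) \<in> box m p"
  unfolding box_def by (auto simp: PiE_iff extensional_def)

lemma box_range: "x \<in> box m p \<Longrightarrow> i < m \<Longrightarrow> x i \<in> {0..<int p}"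
  unfolding box_def by (auto simp: PiE_iff)

lemma box_Suc_sum:
  "card {x \<in> box (Suc m) p. P x} = (\<Sum>g\<in>box m p. card {t \<in> {0..<int p}. P (g(m:=t))})"
proof -
  let ?S = "SIGMA g:box m p. {t \<in> {0..<int p}. P (g(m:=t))}"
  let ?h = "\<lambda>(g,t). g(m:=t)"
  have eq: "{x \<in> box (Suc m) p. P x} = ?h ` ?S"
  proof (intro equalityI subsetI)
    fix x assume x: "x \<in> {x \<in> box (Suc m) p. P x}"
    let ?g = "x(m:=undefined)"
    have g: "?g \<in> box m p" using x box_restrict by blast
    have t: "x m \<in> {0..<int p}" using x box_range by blast
    have xe: "x = ?g(m := x m)" by simp
    have "(?g, x m) \<in> ?S" using g t x xe by simp
    then show "x \<in> ?h ` ?S" using xe by (intro image_eqI[where x="(?g, x m)"]) simp_all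
  next
    fix x assume "x \<in> ?h ` ?S"
    then obtain g t where "g \<in> box m p" "t \<in> {0..<int p}" "P (g(m:=t))" "x = g(m:=t)" by auto
    then show "x \<in> {x \<in> box (Suc m) p. P x}" using box_upd by blast
  qed
  have inj: "inj_on ?h ?S"
  proof (rule inj_onI, clarify)
    fix g t g' t'
    assume g: "g \<in> box m p" "g' \<in> box m p" and e: "g(m:=t) = g'(m:=t')"
    have u: "g m = g' m" using g box_undef by metis
    have "t = t'" using fun_cong[OF e, of m] by simp
    moreover have "g = g'"
    proof
      fix i show "g i = g' i" using u fun_cong[OF e, of i] by (cases "i = m") auto
    qed
    ultimately show "g = g' \<and> t = t'" by simp
  qed
  have "card {x \<in> box (Suc m) p. P x} = card (?h ` ?S)" by (simp only: eq)
  also have "\<dots> = card ?S" by (rule card_image[OF inj])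
  also have "\<dots> = (\<Sum>g\<in>box m p. card {t \<in> {0..<int p}. P (g(m:=t))})"
  proof (rule card_SigmaI)
    show "finite (box m p)" by simp
    show "\<forall>a\<in>box m p. finite {t \<in> {0..<int p}. P (a(m := t))}"
    proof
      fix a show "finite {t \<in> {0..<int p}. P (a(m := t))}"
        by (rule finite_subset[of _ "{0..<int p}"]) auto
    qed
  qed
  finally show ?thesis .
qed

lemma eq_of_dvd_range:
  fixes a b m :: int
  assumes "0 \<le> a" "a < m" "0 \<le> b" "b < m" "m dvd (a - b)"
  shows "a = b"
proof -
  have "a mod m = b mod m" using assms(5) by (simp add: mod_eq_dvd_iff)
  then show ?thesis using assms by simp
qed

lemma dvd_poly_all_coeffs:
  fixes P :: "int poly"
  assumes "\<And>k. m dvd coeff P k"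
  shows "m dvd poly P t"
  unfolding poly_altdef by (rule dvd_sum) (simp add: assms)

lemma roots_mod_p:
  assumes p: "prime p" and lc: "\<not> int p dvd lead_coeff f"
  shows "card {t \<in> {0..<int p}. int p dvd poly f t} \<le> degree f"
  using lc
proof (induction "degree f" arbitrary: f)
  case 0
  then obtain c where f: "f = [:c:]" by (metis degree_0_id)
  then have "lead_coeff f = c" "\<And>t. poly f t = c" by simp_all
  then have "{t \<in> {0..<int p}. int p dvd poly f t} = {}" using 0(2) by auto
  then show ?case by (metis card.empty le0)
next
  case (Suc n f)
  let ?R = "{t \<in> {0..<int p}. int p dvd poly f t}"
  show ?case
  proof (cases "?R = {}")
    case True then show ?thesis by (metis card.empty zero_le)
  next
    case False
    then obtain a where a: "a \<in> ?R" by blast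
    define g where "g = synthetic_div f a"
    have fg: "[:-a,1:] * g + [:poly f a:] = f" unfolding g_def by (rule synthetic_div_correct')
    have dg: "degree g = n" unfolding g_def using Suc(2) by (simp add: degree_synthetic_div)
    have "coeff f (Suc n) = coeff ([:-a,1:] * g + [:poly f a:]) (Suc n)" using fg by simp
    also have "\<dots> = coeff g n"
      using dg by (simp add: mult_pCons_left coeff_eq_0)
    finally have lcg: "lead_coeff g = lead_coeff f" using dg Suc(2) by simp
    have IH: "card {t \<in> {0..<int p}. int p dvd poly g t} \<le> n"
      using Suc(1)[of g] dg lcg Suc(3) by simp
    have pint: "prime (int p)" using p by simp
    have sub: "?R \<subseteq> insert a {t \<in> {0..<int p}. int p dvd poly g t}"
    proof
      fix t assume t: "t \<in> ?R"
      have "poly f t = (t - a) * poly g t + poly f a"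
        using arg_cong[OF fg, of "\<lambda>q. poly q t", symmetric] by (simp add: algebra_simps)
      then have "int p dvd (t - a) * poly g t" using t a
        by (metis (no_types, lifting) dvd_diff add_diff_cancel_right' mem_Collect_eq)
      then have "int p dvd (t - a) \<or> int p dvd poly g t" using pint prime_dvd_mult_iff by blast
      then show "t \<in> insert a {t \<in> {0..<int p}. int p dvd poly g t}"
        using t a eq_of_dvd_range[of t "int p" a] by auto
    qed
    have "card ?R \<le> card (insert a {t \<in> {0..<int p}. int p dvd poly g t})"
    proof (rule card_mono[OF _ sub])
      have "{t \<in> {0..<int p}. int p dvd poly g t} \<subseteq> {0..<int p}" by auto
      then show "finite (insert a {t \<in> {0..<int p}. int p dvd poly g t})"
        using finite_subset by auto
    qed
    also have "\<dots> \<le> Suc (card {t \<in> {0..<int p}. int p dvd poly g t})"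
    proof -
      have "finite {t \<in> {0..<int p}. int p dvd poly g t}"
        by (rule finite_subset[of _ "{0..<int p}"]) auto
      then show ?thesis by (simp add: card_insert_if)
    qed
    also have "\<dots> \<le> Suc n" using IH by simp
    finally have "card ?R \<le> Suc n" .
    then show ?thesis using Suc(2) by arith
  qed
qed

inductive pdeg :: "nat \<Rightarrow> ((nat \<Rightarrow> int) \<Rightarrow> int) \<Rightarrow> nat \<Rightarrow> bool" for m where
  pconst: "pdeg m (\<lambda>x. c) 0"
| pvar: "i < m \<Longrightarrow> pdeg m (\<lambda>x. x i) 1"
| padd: "pdeg m f d \<Longrightarrow> pdeg m g d \<Longrightarrow> pdeg m (\<lambda>x. f x + g x) d"
| pmult: "pdeg m f d1 \<Longrightarrow> pdeg m g d2 \<Longrightarrow> pdeg m (\<lambda>x. f x * g x) (d1 + d2)"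
| pmono: "pdeg m f d \<Longrightarrow> d \<le> d' \<Longrightarrow> pdeg m f d'"

lemma pconst': "pdeg m (\<lambda>x. c) d"
  using pmono[OF pconst] by blast

lemma pdeg_local: "pdeg m f d \<Longrightarrow> (\<And>i. i < m \<Longrightarrow> x i = x' i) \<Longrightarrow> f x = f x'"
  by (induction rule: pdeg.induct) auto

lemma pdeg_sum:
  assumes "finite S" "\<And>s. s \<in> S \<Longrightarrow> pdeg m (f s) d"
  shows "pdeg m (\<lambda>x. \<Sum>s\<in>S. f s x) d"
  using assms
proof (induction S rule: finite_induct)
  case empty then show ?case by (simp add: pconst')
next
  case (insert a S)
  have "pdeg m (\<lambda>x. f a x + (\<Sum>s\<in>S. f s x)) d"
    by (rule padd) (use insert in auto)
  then show ?case using insert by simp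
qed

lemma pdeg_prod:
  assumes "finite S" "\<And>s. s \<in> S \<Longrightarrow> pdeg m (f s) d"
  shows "pdeg m (\<lambda>x. \<Prod>s\<in>S. f s x) (card S * d)"
  using assms
proof (induction S rule: finite_induct)
  case empty then show ?case by (simp add: pconst)
next
  case (insert a S)
  have "pdeg m (\<lambda>x. f a x * (\<Prod>s\<in>S. f s x)) (d + card S * d)"
    by (rule pmult) (use insert in auto)
  then show ?case using insert by simp
qed

lemma pdeg_neg: "pdeg m f d \<Longrightarrow> pdeg m (\<lambda>x. - f x) d"
  using pmult[OF pconst[of m "-1"], of f d] by simp

lemma pdeg_diff: "pdeg m f d \<Longrightarrow> pdeg m g d \<Longrightarrow> pdeg m (\<lambda>x. f x - g x) d"
  using padd[OF _ pdeg_neg[of m g d], of f] by simp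

lemma pdeg_decomp:
  "pdeg (Suc m) f d \<Longrightarrow> \<exists>G. (\<forall>k. pdeg m (\<lambda>x. coeff (G x) k) (d - k)) \<and>
      (\<forall>x. degree (G x) \<le> d) \<and> (\<forall>x. f x = poly (G x) (x m))"
proof (induction rule: pdeg.induct)
  case (pconst c)
  show ?case
  proof (rule exI[of _ "\<lambda>x. [:c:]"], intro conjI allI)
    fix k show "pdeg m (\<lambda>x. coeff [:c:] k) (0 - k)" by (rule pconst')
  qed simp_all
next
  case (pvar i)
  show ?case
  proof (cases "i < m")
    case True
    have "pdeg m (\<lambda>x. coeff [:x i:] k) (1 - k)" for k
    proof (cases k)
      case 0 then show ?thesis using pdeg.pvar[OF True] by simp
    next
      case (Suc k') then show ?thesis using pconst'[of m 0] by simp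
    qed
    then show ?thesis by (intro exI[of _ "\<lambda>x. [:x i:]"]) simp
  next
    case False
    then have i: "i = m" using pvar by simp
    have "pdeg m (\<lambda>x. coeff [:0,1:] k) (1 - k)" for k
      by (rule pconst')
    then show ?thesis using i by (intro exI[of _ "\<lambda>x. [:0,1:]"]) simp
  qed
next
  case (padd f d g)
  then obtain G1 G2 where G1: "\<forall>k. pdeg m (\<lambda>x. coeff (G1 x) k) (d - k)"
      "\<forall>x. degree (G1 x) \<le> d" "\<forall>x. f x = poly (G1 x) (x m)"
    and G2: "\<forall>k. pdeg m (\<lambda>x. coeff (G2 x) k) (d - k)"
      "\<forall>x. degree (G2 x) \<le> d" "\<forall>x. g x = poly (G2 x) (x m)" by blast
  show ?case
  proof (intro exI[of _ "\<lambda>x. G1 x + G2 x"] conjI allI)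
    fix k show "pdeg m (\<lambda>x. coeff (G1 x + G2 x) k) (d - k)"
      using pdeg.padd[OF G1(1)[rule_format, of k] G2(1)[rule_format, of k]] by simp
  next
    fix x show "degree (G1 x + G2 x) \<le> d"
      using G1(2) G2(2) by (meson degree_add_le)
  next
    fix x show "f x + g x = poly (G1 x + G2 x) (x m)" using G1(3) G2(3) by simp
  qed
next
  case (pmult f d1 g d2)
  then obtain G1 G2 where G1: "\<forall>k. pdeg m (\<lambda>x. coeff (G1 x) k) (d1 - k)"
      "\<forall>x. degree (G1 x) \<le> d1" "\<forall>x. f x = poly (G1 x) (x m)"
    and G2: "\<forall>k. pdeg m (\<lambda>x. coeff (G2 x) k) (d2 - k)"
      "\<forall>x. degree (G2 x) \<le> d2" "\<forall>x. g x = poly (G2 x) (x m)" by blast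
  show ?case
  proof (intro exI[of _ "\<lambda>x. G1 x * G2 x"] conjI allI)
    fix k
    have trm: "pdeg m (\<lambda>x. coeff (G1 x) i * coeff (G2 x) (k - i)) (d1 + d2 - k)"
      if i: "i \<in> {..k}" for i
    proof (cases "i \<le> d1 \<and> k - i \<le> d2")
      case True
      have "pdeg m (\<lambda>x. coeff (G1 x) i * coeff (G2 x) (k - i)) ((d1 - i) + (d2 - (k - i)))"
        by (rule pdeg.pmult) (use G1 G2 in auto)
      then show ?thesis by (rule pdeg.pmono) (use True i in auto)
    next
      case False
      then have "\<And>x. coeff (G1 x) i * coeff (G2 x) (k - i) = 0"
        using G1(2) G2(2) by (metis coeff_eq_0 le_less_trans mult_eq_0_iff not_le)
      then have "(\<lambda>x. coeff (G1 x) i * coeff (G2 x) (k - i)) = (\<lambda>x. 0)" by (rule ext)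
      then show ?thesis using pconst'[of m 0] by simp
    qed
    have "pdeg m (\<lambda>x. \<Sum>i\<le>k. coeff (G1 x) i * coeff (G2 x) (k - i)) (d1 + d2 - k)"
      by (rule pdeg_sum) (use trm in auto)
    then show "pdeg m (\<lambda>x. coeff (G1 x * G2 x) k) (d1 + d2 - k)"
      by (simp add: coeff_mult)
  next
    fix x show "degree (G1 x * G2 x) \<le> d1 + d2"
      using G1(2) G2(2) by (meson add_mono degree_mult_le order_trans)
  next
    fix x show "f x * g x = poly (G1 x * G2 x) (x m)" using G1(3) G2(3) by simp
  qed
next
  case (pmono f d d')
  then obtain G where G: "\<forall>k. pdeg m (\<lambda>x. coeff (G x) k) (d - k)"
      "\<forall>x. degree (G x) \<le> d" "\<forall>x. f x = poly (G x) (x m)" by blast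
  show ?case
  proof (intro exI[of _ G] conjI allI)
    fix k show "pdeg m (\<lambda>x. coeff (G x) k) (d' - k)"
      by (rule pdeg.pmono[OF G(1)[rule_format, of k]]) (use pmono in auto)
  next
    fix x show "degree (G x) \<le> d'" using G(2) pmono by (meson order_trans)
  qed (use G in auto)
qed

lemma box0: "box 0 p = {\<lambda>_. undefined}" by (simp add: box_def)

lemma coeff_trunc:
  "coeff (\<Sum>k\<le>k0. monom (c k) k) j = (if j \<le> k0 then c j else (0::int))"
  by (simp add: coeff_sum coeff_monom)

lemma SZ:
  assumes "pdeg m f d" "prime p" "y0 \<in> box m p" "\<not> int p dvd f y0"
  shows "card {x \<in> box m p. int p dvd f x} * p \<le> d * p ^ m"
  using assms
proof (induction m arbitrary: f d y0)
  case 0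
  have "{x \<in> box 0 p. int p dvd f x} = {}" using 0 by (auto simp: box0)
  then show ?case by (metis card.empty mult_is_0 zero_le)
next
  case (Suc m)
  have p0: "p > 0" using Suc.prems(2) prime_gt_0_nat by blast
  obtain G where G1: "\<forall>k. pdeg m (\<lambda>x. coeff (G x) k) (d - k)"
    and G2: "\<forall>x. degree (G x) \<le> d" and G3: "\<forall>x. f x = poly (G x) (x m)"
    using pdeg_decomp[OF Suc.prems(1)] by blast
  define S where "S = {k. k \<le> d \<and> (\<exists>x\<in>box (Suc m) p. \<not> int p dvd coeff (G x) k)}"
  have finS: "finite S" unfolding S_def by (rule finite_subset[of _ "{..d}"]) auto
  have Sne: "S \<noteq> {}"
  proof
    assume "S = {}"
    then have "\<forall>k\<le>d. int p dvd coeff (G y0) k" using Suc.prems(3) unfolding S_def by blast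
    moreover have "\<forall>k>d. coeff (G y0) k = 0" using G2 by (meson coeff_eq_0 le_less_trans)
    ultimately have "\<And>k. int p dvd coeff (G y0) k" by (metis dvd_0_right not_le)
    then have "int p dvd poly (G y0) (y0 m)" by (rule dvd_poly_all_coeffs)
    then show False using Suc.prems(4) G3 by simp
  qed
  define k0 where "k0 = Max S"
  have k0S: "k0 \<in> S" unfolding k0_def using finS Sne by (rule Max_in)
  then have k0d: "k0 \<le> d" and "\<exists>x\<in>box (Suc m) p. \<not> int p dvd coeff (G x) k0" unfolding S_def by auto
  then obtain x1 where x1: "x1 \<in> box (Suc m) p" "\<not> int p dvd coeff (G x1) k0" by blast
  have above: "int p dvd coeff (G x) k" if x: "x \<in> box (Suc m) p" and k: "k > k0" for x k
  proof (cases "k \<le> d")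
    case True
    show ?thesis
    proof (rule ccontr)
      assume "\<not> int p dvd coeff (G x) k"
      then have "k \<in> S" unfolding S_def using True x by blast
      then have "k \<le> k0" unfolding k0_def using finS by simp
      then show False using k by simp
    qed
  next
    case False
    then have "coeff (G x) k = 0" using G2 by (meson coeff_eq_0 not_le order.strict_trans1)
    then show ?thesis by simp
  qed
  define h where "h = (\<lambda>x. coeff (G x) k0)"
  have ph: "pdeg m h (d - k0)" unfolding h_def using G1 by simp
  have loc: "h (x(m:=t)) = h x" for x t
    by (rule pdeg_local[OF ph]) simp
  have coeffloc: "coeff (G (x(m:=t))) k = coeff (G x) k" for x t k
    by (rule pdeg_local[OF G1[rule_format, of k]]) simp
  have Gloc: "G (x(m:=t)) = G x" for x t
    by (rule poly_eqI) (rule coeffloc)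
  have IH: "card {g\<in>box m p. int p dvd h g} * p \<le> (d - k0) * p ^ m"
  proof (rule Suc.IH[OF ph Suc.prems(2)])
    show "x1(m:=undefined) \<in> box m p" using x1(1) by (rule box_restrict)
    show "\<not> int p dvd h (x1(m := undefined))" using loc x1(2) unfolding h_def by simp
  qed
  have fiber: "card {t \<in> {0..<int p}. int p dvd f (g(m:=t))} \<le> (if int p dvd h g then p else k0)"
    if g: "g \<in> box m p" for g
  proof (cases "int p dvd h g")
    case True
    have "card {t \<in> {0..<int p}. int p dvd f (g(m:=t))} \<le> card {0..<int p}"
      by (rule card_mono) auto
    then show ?thesis using True by simp
  next
    case False
    define Q where "Q = G (g(m:=0))"
    have fQ: "f (g(m:=t)) = poly Q t" for t
      using G3 Gloc unfolding Q_def by (metis fun_upd_same fun_upd_upd)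
    define T where "T = (\<Sum>k\<le>k0. monom (coeff Q k) k)"
    have cT: "coeff T j = (if j \<le> k0 then coeff Q j else 0)" for j
      unfolding T_def by (rule coeff_trunc)
    have hQ: "coeff Q k0 = h g" unfolding Q_def h_def using coeffloc by simp
    have dT: "degree T = k0"
    proof (rule antisym)
      show "degree T \<le> k0" by (rule degree_le) (simp add: cT)
      show "k0 \<le> degree T" using False hQ cT by (metis dvd_0_right le_degree order_refl)
    qed
    have lT: "lead_coeff T = h g" using dT cT hQ by simp
    have g0: "g(m:=0) \<in> box (Suc m) p" using box_upd[OF g] p0 by simp
    have diff: "int p dvd poly (Q - T) t" for t
    proof (rule dvd_poly_all_coeffs)
      fix k show "int p dvd coeff (Q - T) k"
        using above[OF g0, of k] by (simp add: cT Q_def)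
    qed
    have "{t \<in> {0..<int p}. int p dvd f (g(m:=t))} = {t \<in> {0..<int p}. int p dvd poly T t}"
    proof -
      have "int p dvd poly Q t \<longleftrightarrow> int p dvd poly T t" for t
      proof -
        have "poly Q t = poly T t + poly (Q - T) t" by simp
        then show ?thesis using diff[of t] by (metis dvd_add_left_iff)
      qed
      then show ?thesis using fQ by simp
    qed
    also have "card \<dots> \<le> degree T" by (rule roots_mod_p[OF Suc.prems(2)]) (use lT False in simp)
    finally show ?thesis using dT False by simp
  qed
  let ?A = "{g\<in>box m p. int p dvd h g}"
  have "card {x \<in> box (Suc m) p. int p dvd f x} = (\<Sum>g\<in>box m p. card {t \<in> {0..<int p}. int p dvd f (g(m:=t))})"
    by (rule box_Suc_sum)
  also have "\<dots> \<le> (\<Sum>g\<in>box m p. (if int p dvd h g then p else k0))"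
    by (rule sum_mono) (rule fiber)
  also have "\<dots> \<le> (\<Sum>g\<in>box m p. (p * (if int p dvd h g then 1 else 0) + k0))"
    by (rule sum_mono) auto
  also have "\<dots> = p * card ?A + k0 * p ^ m"
    by (simp add: sum.distrib sum_distrib_left[symmetric] card_box sum.If_cases Int_def)
  finally have c: "card {x \<in> box (Suc m) p. int p dvd f x} \<le> p * card ?A + k0 * p ^ m" .
  have "card {x \<in> box (Suc m) p. int p dvd f x} * p \<le> (p * card ?A + k0 * p ^ m) * p"
    using c by simp
  also have "\<dots> = p * (card ?A * p) + k0 * p ^ Suc m" by (simp add: algebra_simps)
  also have "\<dots> \<le> p * ((d - k0) * p ^ m) + k0 * p ^ Suc m"
    using IH by simp
  also have "\<dots> = d * p ^ Suc m" using k0d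
    by (simp add: algebra_simps)
  finally show ?case .
qed

definition Amat :: "nat \<Rightarrow> (nat \<Rightarrow> int) \<Rightarrow> (nat \<Rightarrow> int) \<Rightarrow> int mat" where
  "Amat n y z = mat n n (\<lambda>(i,j). if j < n - 1 then y (i * (n-1) + j) else z i)"

definition Pc :: "nat \<Rightarrow> (nat \<Rightarrow> int) \<Rightarrow> nat \<Rightarrow> int poly" where
  "Pc n y i = cofactor (char_poly_matrix (Amat n y (\<lambda>_. 0))) i (n-1)"

definition Dc :: "nat \<Rightarrow> (nat \<Rightarrow> int) \<Rightarrow> nat \<Rightarrow> int" where
  "Dc n y i = cofactor (Amat n y (\<lambda>_. 0)) i (n-1)"

definition Lm :: "nat \<Rightarrow> (nat \<Rightarrow> int) \<Rightarrow> int mat" where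
  "Lm n y = mat n n (\<lambda>(k,i). coeff (Pc n y i) k)"

lemma Amat_carrier[simp]: "Amat n y z \<in> carrier_mat n n" by (simp add: Amat_def)
lemma Amat_dims[simp]: "dim_row (Amat n y z) = n" "dim_col (Amat n y z) = n" by (simp_all add: Amat_def)

lemma Amat_index: "i < n \<Longrightarrow> j < n \<Longrightarrow> Amat n y z $$ (i,j) = (if j < n - 1 then y (i * (n-1) + j) else z i)"
  by (simp add: Amat_def)

lemma cpm_index: "A \<in> carrier_mat n n \<Longrightarrow> i < n \<Longrightarrow> j < n \<Longrightarrow>
   char_poly_matrix A $$ (i,j) = (if i = j then [:0,1:] else 0) + [:- A $$ (i,j):]"
  by (simp add: char_poly_matrix_def)

lemma mat_delete_Amat:
  "mat_delete (Amat n y z) i (n-1) = mat_delete (Amat n y z') i (n-1)"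
  by (rule eq_matI) (auto simp: mat_delete_def Amat_index)

lemma mat_delete_cpm_Amat:
  "mat_delete (char_poly_matrix (Amat n y z)) i (n-1) = mat_delete (char_poly_matrix (Amat n y z')) i (n-1)"
proof (rule eq_matI)
  fix a b assume a: "a < dim_row (mat_delete (char_poly_matrix (Amat n y z')) i (n-1))"
    and b: "b < dim_col (mat_delete (char_poly_matrix (Amat n y z')) i (n-1))"
  then have a': "a < n - 1" and b': "b < n - 1" by (auto simp: char_poly_matrix_def)
  define a2 where "a2 = (if a < i then a else Suc a)"
  have a2: "a2 < n" using a' unfolding a2_def by auto
  have b2: "b < n" using b' by simp
  have "mat_delete (char_poly_matrix (Amat n y z)) i (n-1) $$ (a,b) = char_poly_matrix (Amat n y z) $$ (a2, b)"
    using a' b' unfolding a2_def by (simp add: mat_delete_def char_poly_matrix_def)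
  also have "\<dots> = char_poly_matrix (Amat n y z') $$ (a2, b)"
    using a2 b2 b' by (simp add: cpm_index[OF Amat_carrier] Amat_index)
  also have "\<dots> = mat_delete (char_poly_matrix (Amat n y z')) i (n-1) $$ (a,b)"
    using a' b' unfolding a2_def by (simp add: mat_delete_def char_poly_matrix_def)
  finally show "mat_delete (char_poly_matrix (Amat n y z)) i (n-1) $$ (a,b) =
     mat_delete (char_poly_matrix (Amat n y z')) i (n-1) $$ (a,b)" .
qed (auto simp: char_poly_matrix_def)

lemma det_expand:
  assumes "n > 0"
  shows "det (Amat n y z) = (\<Sum>i<n. z i * Dc n y i)"
proof -
  have "det (Amat n y z) = (\<Sum>i<n. Amat n y z $$ (i, n-1) * cofactor (Amat n y z) i (n-1))"
    by (rule laplace_expansion_column) (use assms in auto)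
  also have "\<dots> = (\<Sum>i<n. z i * Dc n y i)"
  proof (rule sum.cong[OF refl])
    fix i assume "i \<in> {..<n}"
    then show "Amat n y z $$ (i, n-1) * cofactor (Amat n y z) i (n-1) = z i * Dc n y i"
      using assms mat_delete_Amat[of n y z i "\<lambda>_. 0"] unfolding Dc_def cofactor_def
      by (simp add: Amat_index)
  qed
  finally show ?thesis .
qed

lemma cp_expand:
  assumes "n > 0"
  shows "char_poly (Amat n y z) = (\<Sum>i<n. ((if i = n-1 then [:0,1:] else 0) + [:- z i:]) * Pc n y i)"
proof -
  have "char_poly (Amat n y z) = (\<Sum>i<n. char_poly_matrix (Amat n y z) $$ (i, n-1) * cofactor (char_poly_matrix (Amat n y z)) i (n-1))"
    unfolding char_poly_def by (rule laplace_expansion_column) (use assms in auto)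
  also have "\<dots> = (\<Sum>i<n. ((if i = n-1 then [:0,1:] else 0) + [:- z i:]) * Pc n y i)"
  proof (rule sum.cong[OF refl])
    fix i assume i: "i \<in> {..<n}"
    have "char_poly_matrix (Amat n y z) $$ (i, n-1) = (if i = n-1 then [:0,1:] else 0) + [:- z i:]"
      using i assms by (simp add: cpm_index[OF Amat_carrier] Amat_index)
    moreover have "cofactor (char_poly_matrix (Amat n y z)) i (n-1) = Pc n y i"
      unfolding Pc_def cofactor_def using mat_delete_cpm_Amat[of n y z i "\<lambda>_. 0"] by simp
    ultimately show "char_poly_matrix (Amat n y z) $$ (i, n-1) * cofactor (char_poly_matrix (Amat n y z)) i (n-1)
       = ((if i = n-1 then [:0,1:] else 0) + [:- z i:]) * Pc n y i" by simp
  qed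
  finally show ?thesis .
qed

lemma cp_coeff_expand:
  assumes "n > 0"
  shows "coeff (char_poly (Amat n y z)) k = coeff ([:0,1:] * Pc n y (n-1)) k - (\<Sum>i<n. z i * coeff (Pc n y i) k)"
proof -
  have "char_poly (Amat n y z) = (\<Sum>i<n. (if i = n-1 then [:0,1:] * Pc n y i else 0)) + (\<Sum>i<n. [:- z i:] * Pc n y i)"
    unfolding cp_expand[OF assms] sum.distrib[symmetric] by (rule sum.cong) (auto simp: distrib_right)
  also have "(\<Sum>i<n. (if i = n-1 then [:0,1:] * Pc n y i else 0)) = [:0,1:] * Pc n y (n-1)"
    using assms by (simp add: sum.delta)
  finally have e: "char_poly (Amat n y z) = [:0,1:] * Pc n y (n-1) + (\<Sum>i<n. [:- z i:] * Pc n y i)" .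
  show ?thesis unfolding e coeff_add coeff_sum
    by (simp add: sum_negf)
qed

definition compm :: "nat \<Rightarrow> (nat \<Rightarrow> int) \<Rightarrow> int mat" where
  "compm n z = mat n n (\<lambda>(i,j). if j < n - 1 then (if i = j + 1 then 1 else 0) else z i)"

lemma compm_carrier[simp]: "compm n z \<in> carrier_mat n n" by (simp add: compm_def)
lemma compm_dims[simp]: "dim_row (compm n z) = n" "dim_col (compm n z) = n" by (simp_all add: compm_def)
lemma compm_index: "i < n \<Longrightarrow> j < n \<Longrightarrow> compm n z $$ (i,j) = (if j < n - 1 then (if i = j + 1 then 1 else 0) else z i)"
  by (simp add: compm_def)

lemma coeff_cf: "coeff (monom (1::int) m - (\<Sum>i<m. monom (z i) i)) k = (if k = m then 1 else 0) - (if k < m then z k else 0)"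
  by (simp add: coeff_sum)

lemma det0: "(A :: 'a :: comm_ring_1 mat) \<in> carrier_mat 0 0 \<Longrightarrow> det A = 1"
  by (simp add: det_def' permutes_empty)

lemma comp_cp: "char_poly (compm (Suc n) z) = monom 1 (Suc n) - (\<Sum>i<Suc n. monom (z i) i)"
proof (induction n arbitrary: z)
  case 0
  let ?M = "char_poly_matrix (compm 1 z)"
  have "char_poly (compm 1 z) = (\<Sum>i<1. ?M $$ (i,0) * cofactor ?M i 0)"
    unfolding char_poly_def by (rule laplace_expansion_column) auto
  also have "\<dots> = ?M $$ (0,0)"
    by (simp add: cofactor_def det0 mat_delete_carrier[of _ 1 1, simplified])
  also have "\<dots> = [:- z 0, 1:]" by (simp add: cpm_index[OF compm_carrier] compm_index)
  finally show ?case by (intro poly_eqI) (simp add: coeff_cf coeff_pCons split: nat.splits)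
next
  case (Suc n)
  let ?N = "Suc (Suc n)"
  let ?M = "char_poly_matrix (compm ?N z)"
  let ?z' = "\<lambda>i. z (Suc i)"
  have Mc: "?M \<in> carrier_mat ?N ?N" by simp
  have M0: "?M $$ (0,j) = (if j = 0 then [:0,1:] else if j = Suc n then [:- z 0:] else 0)" if "j < ?N" for j
    using that by (simp add: cpm_index[OF compm_carrier] compm_index)
  have d1: "mat_delete ?M 0 0 = char_poly_matrix (compm (Suc n) ?z')"
  proof (rule eq_matI)
    fix a b assume a: "a < dim_row (char_poly_matrix (compm (Suc n) ?z'))"
      and b: "b < dim_col (char_poly_matrix (compm (Suc n) ?z'))"
    then have a': "a < Suc n" and b': "b < Suc n" by (auto simp: char_poly_matrix_def)
    have "mat_delete ?M 0 0 $$ (a,b) = ?M $$ (Suc a, Suc b)"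
      using a' b' by (simp add: mat_delete_def char_poly_matrix_def)
    also have "\<dots> = char_poly_matrix (compm (Suc n) ?z') $$ (a,b)"
      using a' b' by (simp add: cpm_index[OF compm_carrier] compm_index)
    finally show "mat_delete ?M 0 0 $$ (a,b) = char_poly_matrix (compm (Suc n) ?z') $$ (a,b)" .
  qed (auto simp: char_poly_matrix_def)
  define D where "D = mat_delete ?M 0 (Suc n)"
  have Dc: "D \<in> carrier_mat (Suc n) (Suc n)" unfolding D_def using mat_delete_carrier[OF Mc] by simp
  have Di: "D $$ (a,b) = (if b = Suc a then [:0,1:] else 0) + [:- (if a = b then 1 else 0):]"
    if "a < Suc n" "b < Suc n" for a b
    using that unfolding D_def by (simp add: mat_delete_def cpm_index[OF compm_carrier] compm_index char_poly_matrix_def)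
  have ut: "upper_triangular D"
    unfolding upper_triangular_def using Dc Di by auto
  have diag: "diag_mat D = replicate (Suc n) [:-1:]"
  proof -
    have "diag_mat D = map (\<lambda>i. D $$ (i,i)) [0..<Suc n]" using Dc by (simp add: diag_mat_def)
    also have "\<dots> = map (\<lambda>i. [:-1:]) [0..<Suc n]" by (rule map_cong) (auto simp: Di)
    also have "\<dots> = replicate (Suc n) [:-1:]" by (simp add: map_replicate_const)
    finally show ?thesis .
  qed
  have detD: "det D = [:-1:] ^ Suc n"
    using det_upper_triangular[OF ut Dc] diag by simp
  have cof1: "cofactor ?M 0 (Suc n) = 1"
  proof -
    have m1: "[:-1:] = (-1 :: int poly)" by (simp add: one_pCons)
    have "cofactor ?M 0 (Suc n) = (-1) ^ Suc n * (-1) ^ Suc n"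
      unfolding cofactor_def D_def[symmetric] detD m1 by simp
    also have "\<dots> = ((-1) * (-1)) ^ Suc n" by (rule power_mult_distrib[symmetric])
    also have "\<dots> = (1 :: int poly)" by simp
    finally show ?thesis by simp
  qed
  have cof0: "cofactor ?M 0 0 = char_poly (compm (Suc n) ?z')"
    unfolding cofactor_def char_poly_def d1 by simp
  have "char_poly (compm ?N z) = (\<Sum>j<?N. ?M $$ (0,j) * cofactor ?M 0 j)"
    unfolding char_poly_def by (rule laplace_expansion_row[OF Mc]) simp
  also have "\<dots> = (\<Sum>j<Suc n. ?M $$ (0,j) * cofactor ?M 0 j) + ?M $$ (0, Suc n) * cofactor ?M 0 (Suc n)"
    by simp
  also have "(\<Sum>j<Suc n. ?M $$ (0,j) * cofactor ?M 0 j) = ?M $$ (0,0) * cofactor ?M 0 0 + (\<Sum>j<n. ?M $$ (0,Suc j) * cofactor ?M 0 (Suc j))"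
    by (rule sum.lessThan_Suc_shift)
  also have "(\<Sum>j<n. ?M $$ (0,Suc j) * cofactor ?M 0 (Suc j)) = 0"
    by (rule sum.neutral) (simp add: M0)
  finally have e: "char_poly (compm ?N z) = [:0,1:] * char_poly (compm (Suc n) ?z') + [:- z 0:]"
    using M0 cof0 cof1 by simp
  show ?case unfolding e Suc.IH
  proof (rule poly_eqI)
    fix k
    show "coeff ([:0, 1:] * (monom 1 (Suc n) - (\<Sum>i<Suc n. monom (z (Suc i)) i)) + [:- z 0:]) k =
          coeff (monom 1 ?N - (\<Sum>i<?N. monom (z i) i)) k"
    proof (cases k)
      case 0 then show ?thesis by (simp add: coeff_sum)
    next
      case (Suc k') then show ?thesis by (simp add: coeff_sum coeff_pCons)
    qed
  qed
qed

definition ppdeg :: "nat \<Rightarrow> ((nat \<Rightarrow> int) \<Rightarrow> int poly) \<Rightarrow> nat \<Rightarrow> bool" where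
  "ppdeg m F d \<longleftrightarrow> (\<forall>k. pdeg m (\<lambda>x. coeff (F x) k) d)"

lemma ppdeg_const: "ppdeg m (\<lambda>x. c) d"
  unfolding ppdeg_def by (simp add: pconst')

lemma ppdeg_add: "ppdeg m F d \<Longrightarrow> ppdeg m G d \<Longrightarrow> ppdeg m (\<lambda>x. F x + G x) d"
  unfolding ppdeg_def by (simp add: padd)

lemma ppdeg_mult:
  assumes "ppdeg m F d1" "ppdeg m G d2"
  shows "ppdeg m (\<lambda>x. F x * G x) (d1 + d2)"
  unfolding ppdeg_def coeff_mult
proof
  fix k
  show "pdeg m (\<lambda>x. \<Sum>i\<le>k. coeff (F x) i * coeff (G x) (k - i)) (d1 + d2)"
    by (rule pdeg_sum) (use assms in \<open>auto simp: ppdeg_def intro: pmult\<close>)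
qed

lemma ppdeg_sum:
  assumes "finite S" "\<And>s. s \<in> S \<Longrightarrow> ppdeg m (F s) d"
  shows "ppdeg m (\<lambda>x. \<Sum>s\<in>S. F s x) d"
  unfolding ppdeg_def coeff_sum
proof
  fix k show "pdeg m (\<lambda>x. \<Sum>s\<in>S. coeff (F s x) k) d"
    by (rule pdeg_sum) (use assms in \<open>auto simp: ppdeg_def\<close>)
qed

lemma ppdeg_prod:
  assumes "finite S" "\<And>s. s \<in> S \<Longrightarrow> ppdeg m (F s) d"
  shows "ppdeg m (\<lambda>x. \<Prod>s\<in>S. F s x) (card S * d)"
  using assms
proof (induction S rule: finite_induct)
  case empty then show ?case by (simp add: ppdeg_const)
next
  case (insert a S)
  have "ppdeg m (\<lambda>x. F a x * (\<Prod>s\<in>S. F s x)) (d + card S * d)"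
    by (rule ppdeg_mult) (use insert in auto)
  then show ?case using insert by simp
qed

lemma ppdeg_det:
  assumes M: "\<And>x. M x \<in> carrier_mat k k"
    and e: "\<And>i j. i < k \<Longrightarrow> j < k \<Longrightarrow> ppdeg m (\<lambda>x. M x $$ (i,j)) d"
  shows "ppdeg m (\<lambda>x. det (M x)) (k * d)"
proof -
  have eq: "(\<lambda>x. det (M x)) = (\<lambda>x. \<Sum>\<pi>\<in>{p. p permutes {0..<k}}. signof \<pi> * (\<Prod>i=0..<k. M x $$ (i, \<pi> i)))"
    by (rule ext) (rule det_def'[OF M])
  have "ppdeg m (\<lambda>x. \<Sum>\<pi>\<in>{p. p permutes {0..<k}}. signof \<pi> * (\<Prod>i=0..<k. M x $$ (i, \<pi> i))) (0 + k * d)"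
  proof (rule ppdeg_sum)
    show "finite {p. p permutes {0..<k}}" by (simp add: finite_permutations)
    fix \<pi> assume "\<pi> \<in> {p. p permutes {0..<k}}"
    then have pi: "\<pi> permutes {0..<k}" by simp
    have "ppdeg m (\<lambda>x. \<Prod>i=0..<k. M x $$ (i, \<pi> i)) (card {0..<k} * d)"
    proof (rule ppdeg_prod)
      fix i assume "i \<in> {0..<k}"
      then show "ppdeg m (\<lambda>x. M x $$ (i, \<pi> i)) d"
        using e permutes_in_image[OF pi] by auto
    qed simp
    then show "ppdeg m (\<lambda>x. signof \<pi> * (\<Prod>i=0..<k. M x $$ (i, \<pi> i))) (0 + k * d)"
      using ppdeg_mult[OF ppdeg_const[of m "signof \<pi>" 0]] by simp
  qed
  then show ?thesis unfolding eq by simp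
qed

lemma pdeg_det:
  assumes M: "\<And>x. M x \<in> carrier_mat k k"
    and e: "\<And>i j. i < k \<Longrightarrow> j < k \<Longrightarrow> pdeg m (\<lambda>x. M x $$ (i,j)) d"
  shows "pdeg m (\<lambda>x. det (M x)) (k * d)"
proof -
  have eq: "(\<lambda>x. det (M x)) = (\<lambda>x. \<Sum>\<pi>\<in>{p. p permutes {0..<k}}. signof \<pi> * (\<Prod>i=0..<k. M x $$ (i, \<pi> i)))"
    by (rule ext) (rule det_def'[OF M])
  have "pdeg m (\<lambda>x. \<Sum>\<pi>\<in>{p. p permutes {0..<k}}. signof \<pi> * (\<Prod>i=0..<k. M x $$ (i, \<pi> i))) (0 + k * d)"
  proof (rule pdeg_sum)
    show "finite {p. p permutes {0..<k}}" by (simp add: finite_permutations)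
    fix \<pi> assume "\<pi> \<in> {p. p permutes {0..<k}}"
    then have pi: "\<pi> permutes {0..<k}" by simp
    have "pdeg m (\<lambda>x. \<Prod>i=0..<k. M x $$ (i, \<pi> i)) (card {0..<k} * d)"
    proof (rule pdeg_prod)
      fix i assume "i \<in> {0..<k}"
      then show "pdeg m (\<lambda>x. M x $$ (i, \<pi> i)) d"
        using e permutes_in_image[OF pi] by auto
    qed simp
    then show "pdeg m (\<lambda>x. signof \<pi> * (\<Prod>i=0..<k. M x $$ (i, \<pi> i))) (0 + k * d)"
      using pmult[OF pconst[of m "signof \<pi>"]] by simp
  qed
  then show ?thesis unfolding eq by simp
qed

lemma idx_lt: "(i::nat) < n \<Longrightarrow> j < n - 1 \<Longrightarrow> i * (n-1) + j < n * (n-1)"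
proof -
  assume i: "i < n" and j: "j < n - 1"
  have "i * (n-1) + j < i * (n-1) + (n-1)" using j by linarith
  also have "\<dots> = Suc i * (n-1)" by simp
  also have "\<dots> \<le> n * (n-1)" using i by (intro mult_le_mono1) simp
  finally show ?thesis .
qed

lemma pdeg_Amat_entry:
  assumes "i < n" "j < n"
  shows "pdeg (n*(n-1)) (\<lambda>y. Amat n y (\<lambda>_. 0) $$ (i,j)) 1"
proof (cases "j < n - 1")
  case True
  have e: "(\<lambda>y. Amat n y (\<lambda>_. 0) $$ (i,j)) = (\<lambda>y. y (i*(n-1)+j))"
    using True assms by (intro ext) (simp add: Amat_index)
  show ?thesis unfolding e by (rule pvar) (rule idx_lt[OF assms(1) True])
next
  case False
  then show ?thesis using assms by (simp add: Amat_index pconst')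
qed

lemma ppdeg_cpm_entry:
  assumes "i < n" "j < n"
  shows "ppdeg (n*(n-1)) (\<lambda>y. char_poly_matrix (Amat n y (\<lambda>_. 0)) $$ (i,j)) 1"
  unfolding ppdeg_def
proof
  fix k
  have e: "(\<lambda>y. coeff (char_poly_matrix (Amat n y (\<lambda>_. 0)) $$ (i,j)) k)
     = (\<lambda>y. coeff (if i = j then [:0,1:] else 0) k + (if k = 0 then - (Amat n y (\<lambda>_. 0) $$ (i,j)) else 0))"
    using assms by (intro ext) (simp add: cpm_index[OF Amat_carrier] coeff_pCons split: nat.splits)
  show "pdeg (n*(n-1)) (\<lambda>y. coeff (char_poly_matrix (Amat n y (\<lambda>_. 0)) $$ (i,j)) k) 1"
    unfolding e
  proof (rule padd)
    show "pdeg (n * (n - 1)) (\<lambda>x. coeff (if i = j then [:0, 1:] else 0) k) 1" by (rule pconst')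
    show "pdeg (n * (n - 1)) (\<lambda>x. if k = 0 then - Amat n x (\<lambda>_. 0) $$ (i, j) else 0) 1"
      using pdeg_neg[OF pdeg_Amat_entry[OF assms]] by (cases "k = 0") (simp_all add: pconst')
  qed
qed

lemma mat_delete_index':
  "A \<in> carrier_mat n n \<Longrightarrow> a < n - 1 \<Longrightarrow> b < n - 1 \<Longrightarrow>
   mat_delete A i j $$ (a,b) = A $$ (if a < i then a else Suc a, if b < j then b else Suc b)"
  by (simp add: mat_delete_def)

lemma ppdeg_Pc:
  assumes i: "i < n"
  shows "ppdeg (n*(n-1)) (\<lambda>y. Pc n y i) (n-1)"
proof -
  have h: "ppdeg (n*(n-1)) (\<lambda>y. det (mat_delete (char_poly_matrix (Amat n y (\<lambda>_. 0))) i (n-1))) ((n-1) * 1)"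
  proof (rule ppdeg_det)
    fix y show "mat_delete (char_poly_matrix (Amat n y (\<lambda>_. 0))) i (n-1) \<in> carrier_mat (n-1) (n-1)"
      by (rule mat_delete_carrier) simp
  next
    fix a b assume a: "a < n - 1" and b: "b < n - 1"
    have e: "(\<lambda>y. mat_delete (char_poly_matrix (Amat n y (\<lambda>_. 0))) i (n-1) $$ (a,b))
      = (\<lambda>y. char_poly_matrix (Amat n y (\<lambda>_. 0)) $$ (if a < i then a else Suc a, if b < n - 1 then b else Suc b))"
      using a b by (intro ext mat_delete_index') simp_all
    show "ppdeg (n*(n-1)) (\<lambda>y. mat_delete (char_poly_matrix (Amat n y (\<lambda>_. 0))) i (n-1) $$ (a,b)) 1"
      unfolding e by (rule ppdeg_cpm_entry) (use a b in auto)
  qed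
  have "ppdeg (n*(n-1)) (\<lambda>y. (-1)^(i + (n-1)) * det (mat_delete (char_poly_matrix (Amat n y (\<lambda>_. 0))) i (n-1))) (0 + (n-1) * 1)"
    by (rule ppdeg_mult[OF ppdeg_const h])
  then show ?thesis unfolding Pc_def cofactor_def by simp
qed

lemma pdeg_Lm_det: "pdeg (n*(n-1)) (\<lambda>y. det (Lm n y)) (n * (n-1))"
proof (rule pdeg_det)
  fix y show "Lm n y \<in> carrier_mat n n" by (simp add: Lm_def)
next
  fix k i assume "k < n" "i < n"
  then have e: "(\<lambda>y. Lm n y $$ (k,i)) = (\<lambda>y. coeff (Pc n y i) k)" by (simp add: Lm_def)
  show "pdeg (n*(n-1)) (\<lambda>y. Lm n y $$ (k,i)) (n-1)"
    unfolding e using ppdeg_Pc[OF \<open>i < n\<close>] by (simp add: ppdeg_def)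
qed

lemma pdeg_Dc: "pdeg (n*(n-1)) (\<lambda>y. Dc n y (n-1)) (n-1)"
proof -
  have h: "pdeg (n*(n-1)) (\<lambda>y. det (mat_delete (Amat n y (\<lambda>_. 0)) (n-1) (n-1))) ((n-1) * 1)"
  proof (rule pdeg_det)
    fix y show "mat_delete (Amat n y (\<lambda>_. 0)) (n-1) (n-1) \<in> carrier_mat (n-1) (n-1)"
      by (rule mat_delete_carrier) simp
  next
    fix a b assume a: "a < n - 1" and b: "b < n - 1"
    have e: "(\<lambda>y. mat_delete (Amat n y (\<lambda>_. 0)) (n-1) (n-1) $$ (a,b)) = (\<lambda>y. Amat n y (\<lambda>_. 0) $$ (a, b))"
      using a b by (intro ext) (simp add: mat_delete_index'[OF Amat_carrier])
    show "pdeg (n*(n-1)) (\<lambda>y. mat_delete (Amat n y (\<lambda>_. 0)) (n-1) (n-1) $$ (a,b)) 1"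
      unfolding e by (rule pdeg_Amat_entry) (use a b in auto)
  qed
  have "pdeg (n*(n-1)) (\<lambda>y. (-1)^((n-1) + (n-1)) * det (mat_delete (Amat n y (\<lambda>_. 0)) (n-1) (n-1))) (0 + (n-1) * 1)"
    by (rule pmult[OF pconst h])
  then show ?thesis unfolding Dc_def cofactor_def by simp
qed

definition y0w :: "nat \<Rightarrow> nat \<Rightarrow> int" where
  "y0w n = (\<lambda>t\<in>{..<n*(n-1)}. if t div (n-1) = t mod (n-1) + 1 then 1 else 0)"
definition y1w :: "nat \<Rightarrow> nat \<Rightarrow> int" where
  "y1w n = (\<lambda>t\<in>{..<n*(n-1)}. if t div (n-1) = t mod (n-1) then 1 else 0)"

lemma divmod_idx:
  assumes "(n::nat) \<ge> 2" "j < n - 1"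
  shows "(i*(n-1)+j) div (n-1) = i" "(i*(n-1)+j) mod (n-1) = j"
  using assms by simp_all

lemma y0w_box: assumes "prime p" shows "y0w n \<in> box (n*(n-1)) p"
proof -
  have "int p > 1" using prime_gt_1_nat[OF assms] by simp
  then show ?thesis unfolding box_def y0w_def restrict_PiE_iff by simp
qed

lemma y1w_box: assumes "prime p" shows "y1w n \<in> box (n*(n-1)) p"
proof -
  have "int p > 1" using prime_gt_1_nat[OF assms] by simp
  then show ?thesis unfolding box_def y1w_def restrict_PiE_iff by simp
qed

lemma Amat_y0: assumes "n \<ge> 2" shows "Amat n (y0w n) z = compm n z"
proof (rule eq_matI)
  fix i j assume i: "i < dim_row (compm n z)" and j: "j < dim_col (compm n z)"
  then have i': "i < n" and j': "j < n" by auto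
  show "Amat n (y0w n) z $$ (i,j) = compm n z $$ (i,j)"
  proof (cases "j < n - 1")
    case True
    then show ?thesis using i' j' idx_lt[OF i' True] divmod_idx[OF assms True, of i]
      by (simp add: Amat_index compm_index y0w_def)
  next
    case False
    then show ?thesis using i' j' by (simp add: Amat_index compm_index)
  qed
qed auto

lemma Lm_y0: assumes n: "n \<ge> 2" shows "Lm n (y0w n) = 1\<^sub>m n"
proof (rule eq_matI)
  fix k i assume k: "k < dim_row (1\<^sub>m n)" and i: "i < dim_col (1\<^sub>m n)"
  then have k': "k < n" and i': "i < n" by auto
  have n0: "n > 0" using n by simp
  define e where "e = (\<lambda>j. if j = i then 1 else (0::int))"
  define c0 where "c0 = coeff ([:0,1:] * Pc n (y0w n) (n-1)) k"
  have f: "coeff (char_poly (Amat n (y0w n) z)) k = - z k" for z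
  proof -
    have nn: "n = Suc (n-1)" using n by simp
    have "char_poly (Amat n (y0w n) z) = monom 1 n - (\<Sum>i<n. monom (z i) i)"
      unfolding Amat_y0[OF n] using comp_cp[of "n-1" z] nn by simp
    then show ?thesis using k' by (simp add: coeff_sum)
  qed
  have se: "(\<Sum>j<n. e j * coeff (Pc n (y0w n) j) k) = coeff (Pc n (y0w n) i) k"
  proof -
    have "(\<Sum>j<n. e j * coeff (Pc n (y0w n) j) k) = (\<Sum>j<n. if j = i then coeff (Pc n (y0w n) j) k else 0)"
      by (rule sum.cong) (auto simp: e_def)
    then show ?thesis using i' by simp
  qed
  have c1: "coeff (char_poly (Amat n (y0w n) e)) k = c0 - coeff (Pc n (y0w n) i) k"
    unfolding cp_coeff_expand[OF n0] c0_def se ..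
  have c2: "coeff (char_poly (Amat n (y0w n) (\<lambda>_. 0))) k = c0"
    unfolding cp_coeff_expand[OF n0] c0_def by simp
  have "coeff (Pc n (y0w n) i) k = e k" using c1 c2 f[of e] f[of "\<lambda>_. 0"] by simp
  then show "Lm n (y0w n) $$ (k,i) = 1\<^sub>m n $$ (k,i)"
    using k' i' by (simp add: Lm_def e_def)
qed (auto simp: Lm_def)

lemma det_Lm_y0: "n \<ge> 2 \<Longrightarrow> det (Lm n (y0w n)) = 1"
  by (simp add: Lm_y0)

lemma Dc_y1: assumes n: "n \<ge> 2" shows "Dc n (y1w n) (n-1) = 1"
proof -
  have "mat_delete (Amat n (y1w n) (\<lambda>_. 0)) (n-1) (n-1) = 1\<^sub>m (n-1)"
  proof (rule eq_matI)
    fix a b assume a: "a < dim_row (1\<^sub>m (n-1))" and b: "b < dim_col (1\<^sub>m (n-1))"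
    then have a': "a < n - 1" and b': "b < n - 1" by auto
    have an: "a < n" using a' by simp
    show "mat_delete (Amat n (y1w n) (\<lambda>_. 0)) (n-1) (n-1) $$ (a,b) = 1\<^sub>m (n-1) $$ (a,b)"
      using a' b' idx_lt[OF an b'] divmod_idx[OF n b', of a]
      by (simp add: mat_delete_index'[OF Amat_carrier] Amat_index y1w_def)
  qed auto
  then show ?thesis unfolding Dc_def cofactor_def by simp
qed

lemma card_box_fix:
  assumes "i0 < n" "p > 0"
  shows "card {z \<in> box n p. z i0 = 0} = p ^ (n-1)"
proof -
  have "{z \<in> box n p. z i0 = 0} = PiE {..<n} (\<lambda>i. if i = i0 then {0} else {0..<int p})"
  proof (intro equalityI subsetI)
    fix z assume z: "z \<in> {z \<in> box n p. z i0 = 0}"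
    then have ext: "z \<in> extensional {..<n}" by (simp add: box_def PiE_iff)
    have "\<forall>i\<in>{..<n}. z i \<in> (if i = i0 then {0} else {0..<int p})"
      using z box_range[of z n p] by auto
    then show "z \<in> PiE {..<n} (\<lambda>i. if i = i0 then {0} else {0..<int p})"
      using ext by (simp add: PiE_iff)
  next
    fix z assume z: "z \<in> PiE {..<n} (\<lambda>i. if i = i0 then {0} else {0..<int p})"
    then have ext: "z \<in> extensional {..<n}" and r: "\<forall>i\<in>{..<n}. z i \<in> (if i = i0 then {0} else {0..<int p})"
      by (simp_all add: PiE_iff)
    have "z i0 \<in> (if i0 = i0 then {0} else {0..<int p})" using r assms(1) by blast
    then have zi0: "z i0 = 0" by simp
    have "\<forall>i\<in>{..<n}. z i \<in> {0..<int p}"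
    proof
      fix i assume i: "i \<in> {..<n}"
      show "z i \<in> {0..<int p}"
      proof (cases "i = i0")
        case True then show ?thesis using zi0 assms(2) by simp
      next
        case False
        have "z i \<in> (if i = i0 then {0} else {0..<int p})" using r i by blast
        then show ?thesis using False by simp
      qed
    qed
    then show "z \<in> {z \<in> box n p. z i0 = 0}" using ext zi0 by (simp add: box_def PiE_iff)
  qed
  then have "card {z \<in> box n p. z i0 = 0} = (\<Prod>i<n. card (if i = i0 then {0} else {0..<int p}))"
    by (simp add: card_PiE)
  also have "\<dots> = (\<Prod>i<n. (if i = i0 then 1 else p))"
    by (rule prod.cong) auto
  also have "\<dots> = p ^ (n-1)"
  proof -
    have "(\<Prod>i<n. (if i = i0 then 1 else p)) = (if i0 = i0 then 1 else p) * (\<Prod>i\<in>{..<n} - {i0}. (if i = i0 then 1 else p))"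
      by (rule prod.remove) (use assms(1) in auto)
    also have "(\<Prod>i\<in>{..<n} - {i0}. (if i = i0 then 1 else p)) = (\<Prod>i\<in>{..<n} - {i0}. p)"
      by (rule prod.cong) auto
    also have "\<dots> = p ^ card ({..<n} - {i0})" by (rule prod_constant)
    also have "card ({..<n} - {i0}) = n - 1" using assms(1) by simp
    finally show ?thesis by simp
  qed
  finally show ?thesis .
qed

lemma hyper_upper:
  assumes p: "prime p" and n: "n > 0"
  shows "card {z \<in> box n p. [(\<Sum>i<n. z i * D i) = 1] (mod int p)} \<le> p ^ (n-1)"
proof (cases "\<forall>i<n. int p dvd D i")
  case True
  have "{z \<in> box n p. [(\<Sum>i<n. z i * D i) = 1] (mod int p)} = {}"
  proof (rule ccontr)
    assume "\<not> ?thesis"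
    then obtain z where z: "[(\<Sum>i<n. z i * D i) = 1] (mod int p)" by blast
    have "int p dvd (\<Sum>i<n. z i * D i)" using True by (intro dvd_sum) auto
    then have "int p dvd 1" using z by (metis cong_dvd_iff)
    then show False using p by (simp add: prime_gt_1_nat)
  qed
  then show ?thesis by (metis card.empty le0)
next
  case False
  then obtain i0 where i0: "i0 < n" "\<not> int p dvd D i0" by blast
  let ?S = "{z \<in> box n p. [(\<Sum>i<n. z i * D i) = 1] (mod int p)}"
  have p0: "p > 0" using p prime_gt_0_nat by blast
  have inj: "inj_on (\<lambda>z. z(i0 := 0)) ?S"
  proof (rule inj_onI)
    fix z z' assume z: "z \<in> ?S" and z': "z' \<in> ?S" and e: "z(i0 := 0) = z'(i0 := 0)"
    have oth: "z j = z' j" if "j \<noteq> i0" for j using fun_cong[OF e, of j] that by simp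
    have "(\<Sum>i<n. z i * D i) - (\<Sum>i<n. z' i * D i) = (\<Sum>i<n. (z i - z' i) * D i)"
      by (simp add: sum_subtractf left_diff_distrib)
    also have "\<dots> = (\<Sum>i<n. if i = i0 then (z i0 - z' i0) * D i0 else 0)"
      by (rule sum.cong) (auto simp: oth)
    also have "\<dots> = (z i0 - z' i0) * D i0" using i0 by simp
    finally have d: "(\<Sum>i<n. z i * D i) - (\<Sum>i<n. z' i * D i) = (z i0 - z' i0) * D i0" .
    have z1: "[(\<Sum>i<n. z i * D i) = 1] (mod int p)" using z by simp
    have z2: "[(\<Sum>i<n. z' i * D i) = 1] (mod int p)" using z' by simp
    have "[(\<Sum>i<n. z i * D i) = (\<Sum>i<n. z' i * D i)] (mod int p)"
      by (rule cong_trans[OF z1 cong_sym[OF z2]])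
    then have "int p dvd (\<Sum>i<n. z i * D i) - (\<Sum>i<n. z' i * D i)"
      by (simp add: cong_iff_dvd_diff)
    then have "int p dvd (z i0 - z' i0) * D i0" by (simp only: d)
    moreover have pp: "prime (int p)" using p by simp
    ultimately have "int p dvd (z i0 - z' i0) \<or> int p dvd D i0"
      by (simp add: prime_dvd_mult_iff)
    then have "int p dvd (z i0 - z' i0)" using i0(2) by blast
    moreover have "z i0 \<in> {0..<int p}" "z' i0 \<in> {0..<int p}" using z z' i0 box_range by blast+
    ultimately have "z i0 = z' i0" using eq_of_dvd_range by auto
    then show "z = z'" using oth by (metis ext)
  qed
  have "card ?S \<le> card {z \<in> box n p. z i0 = 0}"
  proof (rule card_inj_on_le[OF inj])
    show "(\<lambda>z. z(i0 := 0)) ` ?S \<subseteq> {z \<in> box n p. z i0 = 0}"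
      using i0 p0 by (auto simp: box_def PiE_iff extensional_def)
    show "finite {z \<in> box n p. z i0 = 0}" by simp
  qed
  also have "\<dots> = p ^ (n-1)" by (rule card_box_fix[OF i0(1) p0])
  finally show ?thesis .
qed

lemma hyper_lower:
  assumes p: "prime p" and n: "n > 0" and D: "\<not> int p dvd D (n-1)"
  shows "p ^ (n-1) \<le> card {z \<in> box n p. [(\<Sum>i<n. z i * D i) = 1] (mod int p)}"
proof -
  have "coprime (int p) (D (n-1))" using p D by (intro prime_imp_coprime) simp_all
  then have "coprime (D (n-1)) (int p)" by (simp add: coprime_commute)
  then obtain u where u: "[D (n-1) * u = 1] (mod int p)" using cong_solve_coprime_int by blast
  have p0: "p > 0" using p prime_gt_0_nat by blast
  define ext where "ext = (\<lambda>w. (\<lambda>i\<in>{..<n}. if i < n - 1 then w i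
        else ((1 - (\<Sum>j<n-1. w j * D j)) * u) mod int p))"
  let ?S = "{z \<in> box n p. [(\<Sum>i<n. z i * D i) = 1] (mod int p)}"
  have inj: "inj_on ext (box (n-1) p)"
  proof (rule inj_onI)
    fix w w' assume w: "w \<in> box (n-1) p" and w': "w' \<in> box (n-1) p" and e: "ext w = ext w'"
    show "w = w'"
    proof
      fix i show "w i = w' i"
      proof (cases "i < n - 1")
        case True
        then have "i < n" by simp
        then show ?thesis using True fun_cong[OF e, of i] by (simp add: ext_def)
      next
        case False
        then show ?thesis using w w' by (simp add: box_def PiE_def extensional_def)
      qed
    qed
  qed
  have img: "ext ` box (n-1) p \<subseteq> ?S"
  proof
    fix z assume "z \<in> ext ` box (n-1) p"
    then obtain w where w: "w \<in> box (n-1) p" and z: "z = ext w" by blast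
    let ?s = "\<Sum>j<n-1. w j * D j"
    let ?t = "((1 - ?s) * u) mod int p"
    have zb: "z \<in> box n p"
      unfolding z ext_def box_def restrict_PiE_iff
      using w p0 by (auto simp: box_def PiE_iff)
    have nn: "{..<n} = insert (n-1) {..<n-1}" using n by auto
    have "(\<Sum>i<n. z i * D i) = ?s + ?t * D (n-1)"
    proof -
      have "(\<Sum>i<n. z i * D i) = z (n-1) * D (n-1) + (\<Sum>i<n-1. z i * D i)"
        unfolding nn by (simp add: sum.insert)
      also have "(\<Sum>i<n-1. z i * D i) = ?s" by (rule sum.cong) (auto simp: z ext_def)
      also have "z (n-1) = ?t" using n by (simp add: z ext_def)
      finally show ?thesis by simp
    qed
    moreover have "[?s + ?t * D (n-1) = 1] (mod int p)"
    proof -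
      have "[?t * D (n-1) = (1 - ?s) * u * D (n-1)] (mod int p)"
        by (intro cong_mult cong_refl) (simp add: cong_def)
      moreover have "[(1 - ?s) * u * D (n-1) = (1 - ?s) * 1] (mod int p)"
        using cong_mult[OF cong_refl[of "1 - ?s"] u] by (simp add: algebra_simps)
      ultimately have "[?t * D (n-1) = 1 - ?s] (mod int p)" using cong_trans by fastforce
      then have "[?s + ?t * D (n-1) = ?s + (1 - ?s)] (mod int p)" by (intro cong_add cong_refl)
      then show ?thesis by simp
    qed
    ultimately show "z \<in> ?S" using zb by simp
  qed
  have "card (box (n-1) p) \<le> card ?S"
    by (rule card_inj_on_le[OF inj img]) (rule finite_subset[of _ "box n p"]; auto)
  then show ?thesis by (simp add: card_box)
qed

definition polyc :: "nat \<Rightarrow> (nat \<Rightarrow> int) \<Rightarrow> int poly" where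
  "polyc n c = monom 1 n + (\<Sum>k<n. monom (c k) k)"

lemma coeff_polyc: "coeff (polyc n c) i = (if i = n then 1 else 0) + (if i < n then c i else 0)"
  by (simp add: polyc_def coeff_sum)

definition Sgood :: "nat \<Rightarrow> nat \<Rightarrow> (nat \<Rightarrow> int) set" where
  "Sgood n p = {c \<in> box n p. c 0 = ((-1)^n) mod int p \<and> (\<exists>q r. lead_coeff q = 1 \<and> 1 \<le> degree q \<and> degree q \<le> n - 1
      \<and> coeff q 0 = 1 \<and> (\<forall>i. [coeff (polyc n c) i = coeff (q * r) i] (mod int p)))}"

lemma cong_prod_coeff:
  assumes "\<And>i. [coeff a i = coeff a' i] (mod m)" "\<And>i. [coeff b i = coeff b' i] (mod m)"
  shows "[coeff (a * b) k = coeff (a' * b') k] (mod m)"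
  unfolding coeff_mult by (intro cong_sum cong_mult assms)

lemma reduce_cofactor:
  fixes F q r :: "int poly"
  assumes p: "prime p" and Fn: "coeff F n = 1" and Fz: "\<And>i. i > n \<Longrightarrow> coeff F i = 0"
    and q: "lead_coeff q = 1" and c: "\<And>i. [coeff F i = coeff (q * r) i] (mod int p)"
  shows "\<exists>s. lead_coeff s = 1 \<and> degree s = n - degree q \<and> degree q \<le> n \<and>
      (\<forall>i. [coeff F i = coeff (q * s) i] (mod int p))"
proof -
  have p1: "int p > 1" using prime_gt_1_nat[OF p] by simp
  define s where "s = map_poly (\<lambda>a. a mod int p) r"
  have cs: "coeff s i = coeff r i mod int p" for i unfolding s_def by (simp add: coeff_map_poly)
  have csr: "[coeff s i = coeff r i] (mod int p)" for i unfolding cs by (simp add: cong_def)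
  have cqs: "[coeff F i = coeff (q * s) i] (mod int p)" for i
  proof -
    have "[coeff (q * r) i = coeff (q * s) i] (mod int p)"
      by (rule cong_prod_coeff) (simp_all add: cong_sym[OF csr])
    then show ?thesis using c[of i] cong_trans by blast
  qed
  have s0: "s \<noteq> 0"
  proof
    assume "s = 0"
    then have "[1 = 0] (mod int p)" using cqs[of n] Fn by simp
    then show False using p1 by (simp add: cong_def)
  qed
  have q0: "q \<noteq> 0" using q by auto
  define e where "e = degree s"
  have lcs: "lead_coeff s \<in> {0<..<int p}"
  proof -
    have "lead_coeff s \<noteq> 0" using s0 by simp
    moreover have "lead_coeff s \<in> {0..<int p}" unfolding cs using p1 by simp
    ultimately show ?thesis by auto
  qed
  have dqs: "degree (q * s) = degree q + e" unfolding e_def using q0 s0 by (rule degree_mult_eq)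
  have lqs: "coeff (q * s) (degree q + e) = lead_coeff s"
    unfolding e_def using coeff_mult_degree_sum[of q s] q by simp
  have eq: "degree q + e = n"
  proof (rule ccontr)
    assume ne: "degree q + e \<noteq> n"
    show False
    proof (cases "degree q + e > n")
      case True
      then have "[0 = lead_coeff s] (mod int p)" using cqs[of "degree q + e"] Fz[OF True] lqs by simp
      then have "int p dvd lead_coeff s" using cong_0_iff cong_sym by blast
      moreover have "lead_coeff s > 0" using lcs by simp
      ultimately have "int p \<le> lead_coeff s" by (rule zdvd_imp_le)
      then show False using lcs by simp
    next
      case False
      then have "n > degree (q * s)" using ne dqs by simp
      then have "coeff (q * s) n = 0" by (rule coeff_eq_0)
      then have "[1 = 0] (mod int p)" using cqs[of n] Fn by simp
      then show False using p1 by (simp add: cong_def)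
    qed
  qed
  have "[1 = lead_coeff s] (mod int p)" using cqs[of n] Fn lqs eq by simp
  then have "int p dvd 1 - lead_coeff s" by (simp add: cong_iff_dvd_diff)
  then have "1 = lead_coeff s" by (rule eq_of_dvd_range[rotated 4]) (use lcs p1 in auto)
  then have "lead_coeff s = 1" by simp
  then show ?thesis using eq e_def cqs by (intro exI[of _ s]) auto
qed

lemma card_Sd:
  assumes p: "prime p" and n: "n \<ge> 2" and d: "1 \<le> d" "d \<le> n - 1"
  defines "P \<equiv> (\<lambda>c q s. lead_coeff q = 1 \<and> degree q = d \<and> coeff q 0 = 1 \<and> lead_coeff s = 1 \<and> degree s = n - d
      \<and> (\<forall>i. [coeff (polyc n c) i = coeff (q * s) i] (mod int p)))"
  shows "card {c \<in> Sgood n p. \<exists>q s. P c q s} \<le> p ^ (n - 2)"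
proof -
  let ?S = "{c \<in> Sgood n p. \<exists>q s. P c q s}"
  have p0: "int p > 0" using prime_gt_0_nat[OF p] by simp
  have p1: "int p > 1" using prime_gt_1_nat[OF p] by simp
  define qc where "qc c = (SOME q. \<exists>s. P c q s)" for c
  define sc where "sc c = (SOME s. P c (qc c) s)" for c
  have PP: "P c (qc c) (sc c)" if "c \<in> ?S" for c
  proof -
    have "\<exists>q s. P c q s" using that by blast
    then have "\<exists>s. P c (qc c) s" unfolding qc_def by (rule someI_ex)
    then show ?thesis unfolding sc_def by (rule someI_ex)
  qed
  define phi where "phi c = ((\<lambda>i\<in>{..<d-1}. coeff (qc c) (Suc i) mod int p),
                             (\<lambda>i\<in>{..<n-d-1}. coeff (sc c) (Suc i) mod int p))" for c
  have img: "phi ` ?S \<subseteq> box (d-1) p \<times> box (n-d-1) p"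
  proof (rule image_subsetI)
    fix c show "phi c \<in> box (d-1) p \<times> box (n-d-1) p"
      unfolding phi_def box_def mem_Times_iff fst_conv snd_conv restrict_PiE_iff using p0 by simp
  qed
  have c0: "c 0 = ((-1)^n) mod int p" if "c \<in> ?S" for c using that by (simp add: Sgood_def)
  have inj: "inj_on phi ?S"
  proof (rule inj_onI)
    fix c c' assume c: "c \<in> ?S" and c': "c' \<in> ?S" and e: "phi c = phi c'"
    let ?q = "qc c" and ?s = "sc c" and ?q' = "qc c'" and ?s' = "sc c'"
    have P1: "P c ?q ?s" using PP[OF c] .
    have P2: "P c' ?q' ?s'" using PP[OF c'] .
    have e1: "coeff ?q (Suc i) mod int p = coeff ?q' (Suc i) mod int p" if "i < d - 1" for i
      using fun_cong[OF arg_cong[OF e, of fst], of i] that by (simp add: phi_def)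
    have e2: "coeff ?s (Suc i) mod int p = coeff ?s' (Suc i) mod int p" if "i < n - d - 1" for i
      using fun_cong[OF arg_cong[OF e, of snd], of i] that by (simp add: phi_def)
    have cq: "[coeff ?q i = coeff ?q' i] (mod int p)" for i
    proof -
      consider "i = 0" | "0 < i \<and> i < d" | "i = d" | "i > d" by linarith
      then show ?thesis
      proof cases
        case 1 then show ?thesis using P1 P2 by (simp add: P_def)
      next
        case 2
        then obtain j where j0: "i = Suc j" by (cases i) auto
        then have j: "i = Suc j" "j < d - 1" using 2 by auto
        then show ?thesis using e1[OF j(2)] by (simp add: cong_def)
      next
        case 3
        have A: "degree ?q = d \<and> coeff ?q (degree ?q) = 1" "degree ?q' = d \<and> coeff ?q' (degree ?q') = 1"
          using P1 P2 unfolding P_def by blast+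
        have "coeff ?q d = 1" "coeff ?q' d = 1" using A by metis+
        then show ?thesis using 3 by simp
      next
        case 4 then show ?thesis using P1 P2 by (simp add: P_def coeff_eq_0)
      qed
    qed
    have s0: "[coeff (polyc n c) 0 = coeff ?s 0] (mod int p)"
    proof -
      have A: "[coeff (polyc n c) 0 = coeff (?q * ?s) 0] (mod int p)" "coeff ?q 0 = 1"
        using P1 unfolding P_def by blast+
      then show ?thesis by (simp add: coeff_mult_0)
    qed
    have s0': "[coeff (polyc n c') 0 = coeff ?s' 0] (mod int p)"
    proof -
      have A: "[coeff (polyc n c') 0 = coeff (?q' * ?s') 0] (mod int p)" "coeff ?q' 0 = 1"
        using P2 unfolding P_def by blast+
      then show ?thesis by (simp add: coeff_mult_0)
    qed
    have pc0: "coeff (polyc n c) 0 = coeff (polyc n c') 0"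
      using n c0[OF c] c0[OF c'] by (simp add: coeff_polyc)
    have cs: "[coeff ?s i = coeff ?s' i] (mod int p)" for i
    proof -
      consider "i = 0" | "0 < i \<and> i < n - d" | "i = n - d" | "i > n - d" by linarith
      then show ?thesis
      proof cases
        case 1
        have "[coeff ?s 0 = coeff (polyc n c') 0] (mod int p)" using cong_sym[OF s0] pc0 by simp
        then show ?thesis using 1 cong_trans[OF _ s0'] by blast
      next
        case 2
        then obtain j where j0: "i = Suc j" by (cases i) auto
        then have j: "i = Suc j" "j < n - d - 1" using 2 by auto
        then show ?thesis using e2[OF j(2)] by (simp add: cong_def)
      next
        case 3
        have A: "degree ?s = n - d \<and> coeff ?s (degree ?s) = 1" "degree ?s' = n - d \<and> coeff ?s' (degree ?s') = 1"
          using P1 P2 unfolding P_def by blast+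
        have "coeff ?s (n - d) = 1" "coeff ?s' (n - d) = 1" using A by metis+
        then show ?thesis using 3 by simp
      next
        case 4 then show ?thesis using P1 P2 by (simp add: P_def coeff_eq_0)
      qed
    qed
    have cp: "[coeff (polyc n c) k = coeff (polyc n c') k] (mod int p)" for k
    proof -
      have "[coeff (polyc n c) k = coeff (?q * ?s) k] (mod int p)" using P1 by (simp add: P_def)
      moreover have "[coeff (?q * ?s) k = coeff (?q' * ?s') k] (mod int p)"
        by (rule cong_prod_coeff[OF cq cs])
      moreover have "[coeff (?q' * ?s') k = coeff (polyc n c') k] (mod int p)"
        using P2 by (simp add: P_def cong_sym)
      ultimately show ?thesis using cong_trans by blast
    qed
    have cb: "c \<in> box n p" "c' \<in> box n p" using c c' by (auto simp: Sgood_def)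
    show "c = c'"
    proof
      fix k show "c k = c' k"
      proof (cases "k < n")
        case True
        have "[c k = c' k] (mod int p)" using cp[of k] True by (simp add: coeff_polyc)
        then have "int p dvd c k - c' k" by (simp add: cong_iff_dvd_diff)
        moreover have "c k \<in> {0..<int p}" "c' k \<in> {0..<int p}" using cb True box_range by blast+
        ultimately show ?thesis using eq_of_dvd_range by auto
      next
        case False
        then show ?thesis using cb by (simp add: box_def PiE_def extensional_def)
      qed
    qed
  qed
  have "card ?S \<le> card (box (d-1) p \<times> box (n-d-1) p)"
    by (rule card_inj_on_le[OF inj img]) simp
  also have "\<dots> = p ^ (d-1) * p ^ (n-d-1)" by (simp add: card_cartesian_product card_box)
  also have "\<dots> = p ^ (n - 2)" using d n by (simp add: power_add[symmetric])
  finally show ?thesis .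
qed

lemma card_Sgood:
  assumes p: "prime p" and n: "n \<ge> 2"
  shows "card (Sgood n p) \<le> (n - 1) * p ^ (n - 2)"
proof -
  define P where "P d = (\<lambda>c q s. lead_coeff q = 1 \<and> degree q = d \<and> coeff q 0 = 1 \<and> lead_coeff s = 1 \<and> degree s = n - d
      \<and> (\<forall>i. [coeff (polyc n c) i = coeff (q * s) i] (mod int p)))" for d
  define Sd where "Sd d = {c \<in> Sgood n p. \<exists>q s. P d c q s}" for d
  have cover: "Sgood n p \<subseteq> (\<Union>d\<in>{1..n-1}. Sd d)"
  proof
    fix c assume c: "c \<in> Sgood n p"
    then obtain q r where q: "lead_coeff q = 1" "1 \<le> degree q" "degree q \<le> n - 1" "coeff q 0 = 1"
      and qr: "\<forall>i. [coeff (polyc n c) i = coeff (q * r) i] (mod int p)"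
      unfolding Sgood_def by blast
    obtain s where s: "lead_coeff s = 1" "degree s = n - degree q"
      "\<forall>i. [coeff (polyc n c) i = coeff (q * s) i] (mod int p)"
      using reduce_cofactor[OF p, of "polyc n c" n q r] q(1) qr by (auto simp: coeff_polyc)
    have "c \<in> Sd (degree q)" unfolding Sd_def P_def using c q s by blast
    then show "c \<in> (\<Union>d\<in>{1..n-1}. Sd d)" using q by auto
  qed
  have each: "card (Sd d) \<le> p ^ (n - 2)" if "d \<in> {1..n-1}" for d
    unfolding Sd_def P_def using card_Sd[OF p n, of d] that by simp
  have fin: "finite (\<Union>d\<in>{1..n-1}. Sd d)"
    by (rule finite_subset[of _ "box n p"]) (auto simp: Sd_def Sgood_def)
  have "card (Sgood n p) \<le> card (\<Union>d\<in>{1..n-1}. Sd d)" by (rule card_mono[OF fin cover])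
  also have "\<dots> \<le> (\<Sum>d\<in>{1..n-1}. card (Sd d))" by (rule card_UN_le) simp
  also have "\<dots> \<le> (\<Sum>d\<in>{1..n-1}. p ^ (n - 2))" by (rule sum_mono) (rule each)
  also have "\<dots> = (n - 1) * p ^ (n - 2)" by simp
  finally show ?thesis .
qed

lemma Amat_Fp:
  assumes n: "n \<ge> 2" and y: "y \<in> box (n*(n-1)) p" and z: "z \<in> box n p"
  shows "Amat n y z \<in> Fp_mats n p"
  unfolding Fp_mats_def
proof (intro CollectI conjI allI impI)
  show "Amat n y z \<in> carrier_mat n n" by simp
  fix i j assume i: "i < n" and j: "j < n"
  show "Amat n y z $$ (i, j) \<in> {0..<int p}"
  proof (cases "j < n - 1")
    case True
    then show ?thesis using i j box_range[OF y idx_lt[OF i True]] by (simp add: Amat_index)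
  next
    case False
    then show ?thesis using i j box_range[OF z i] by (simp add: Amat_index)
  qed
qed

definition yof :: "nat \<Rightarrow> int mat \<Rightarrow> nat \<Rightarrow> int" where
  "yof n A = (\<lambda>t\<in>{..<n*(n-1)}. A $$ (t div (n-1), t mod (n-1)))"
definition zof :: "nat \<Rightarrow> int mat \<Rightarrow> nat \<Rightarrow> int" where
  "zof n A = (\<lambda>i\<in>{..<n}. A $$ (i, n-1))"

lemma t_decomp:
  assumes n: "(n::nat) \<ge> 2" and t: "t < n*(n-1)"
  shows "t div (n-1) < n" "t mod (n-1) < n - 1" "(t div (n-1)) * (n-1) + t mod (n-1) = t"
proof -
  show "t div (n-1) < n" using t by (simp add: less_mult_imp_div_less)
  show "t mod (n-1) < n - 1" using n by simp
  show "(t div (n-1)) * (n-1) + t mod (n-1) = t" by (rule div_mult_mod_eq)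
qed

lemma yz_of_Amat:
  assumes n: "n \<ge> 2" and y: "y \<in> box (n*(n-1)) p" and z: "z \<in> box n p"
  shows "yof n (Amat n y z) = y" "zof n (Amat n y z) = z"
proof -
  show "yof n (Amat n y z) = y"
  proof
    fix t show "yof n (Amat n y z) t = y t"
    proof (cases "t < n*(n-1)")
      case True
      note td = t_decomp[OF n True]
      then show ?thesis using True by (simp add: yof_def Amat_index)
    next
      case False
      then show ?thesis using y by (simp add: yof_def box_def PiE_def extensional_def)
    qed
  qed
  show "zof n (Amat n y z) = z"
  proof
    fix i show "zof n (Amat n y z) i = z i"
    proof (cases "i < n")
      case True
      then show ?thesis using n by (simp add: zof_def Amat_index)
    next
      case False
      then show ?thesis using z by (simp add: zof_def box_def PiE_def extensional_def)
    qed
  qed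
qed

lemma Amat_of:
  assumes n: "n \<ge> 2" and A: "A \<in> Fp_mats n p"
  shows "yof n A \<in> box (n*(n-1)) p" "zof n A \<in> box n p" "Amat n (yof n A) (zof n A) = A"
proof -
  have Ac: "A \<in> carrier_mat n n" and Ar: "\<And>i j. i < n \<Longrightarrow> j < n \<Longrightarrow> A $$ (i,j) \<in> {0..<int p}"
    using A unfolding Fp_mats_def by auto
  show "yof n A \<in> box (n*(n-1)) p"
    unfolding yof_def box_def restrict_PiE_iff
  proof
    fix t assume "t \<in> {..<n*(n-1)}"
    then have t: "t < n*(n-1)" by simp
    note td = t_decomp[OF n t]
    show "A $$ (t div (n-1), t mod (n-1)) \<in> {0..<int p}"
      by (rule Ar) (use td in auto)
  qed
  show "zof n A \<in> box n p"
    unfolding zof_def box_def restrict_PiE_iff using Ar n by auto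
  show "Amat n (yof n A) (zof n A) = A"
  proof (rule eq_matI)
    fix i j assume i: "i < dim_row A" and j: "j < dim_col A"
    then have i': "i < n" and j': "j < n" using Ac by auto
    show "Amat n (yof n A) (zof n A) $$ (i,j) = A $$ (i,j)"
    proof (cases "j < n - 1")
      case True
      then show ?thesis using i' j' idx_lt[OF i' True] divmod_idx[OF n True, of i]
        by (simp add: Amat_index yof_def)
    next
      case False
      then have "j = n - 1" using j' by simp
      then show ?thesis using i' j' by (simp add: Amat_index zof_def)
    qed
  qed (use Ac in auto)
qed

lemma card_Fp_split:
  assumes n: "n \<ge> 2"
  shows "card {A \<in> Fp_mats n p. P A} = (\<Sum>y\<in>box (n*(n-1)) p. card {z \<in> box n p. P (Amat n y z)})"
proof -
  let ?S = "SIGMA y:box (n*(n-1)) p. {z \<in> box n p. P (Amat n y z)}"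
  let ?h = "\<lambda>(y,z). Amat n y z"
  have eq: "{A \<in> Fp_mats n p. P A} = ?h ` ?S"
  proof (intro equalityI subsetI)
    fix A assume A: "A \<in> {A \<in> Fp_mats n p. P A}"
    then have A': "A \<in> Fp_mats n p" and PA: "P A" by auto
    note ao = Amat_of[OF n A']
    have "(yof n A, zof n A) \<in> ?S" using ao PA by simp
    then show "A \<in> ?h ` ?S" using ao(3) by (intro image_eqI[where x="(yof n A, zof n A)"]) simp_all
  next
    fix A assume "A \<in> ?h ` ?S"
    then obtain y z where "y \<in> box (n*(n-1)) p" "z \<in> box n p" "P (Amat n y z)" "A = Amat n y z" by auto
    then show "A \<in> {A \<in> Fp_mats n p. P A}" using Amat_Fp[OF n] by auto
  qed
  have inj: "inj_on ?h ?S"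
  proof (rule inj_onI, clarify)
    fix y z y' z'
    assume y: "y \<in> box (n*(n-1)) p" and z: "z \<in> box n p" and y': "y' \<in> box (n*(n-1)) p" and z': "z' \<in> box n p"
      and e: "Amat n y z = Amat n y' z'"
    show "y = y' \<and> z = z'"
      using yz_of_Amat[OF n y z] yz_of_Amat[OF n y' z'] e by metis
  qed
  have "card {A \<in> Fp_mats n p. P A} = card (?h ` ?S)" by (simp only: eq)
  also have "\<dots> = card ?S" by (rule card_image[OF inj])
  also have "\<dots> = (\<Sum>y\<in>box (n*(n-1)) p. card {z \<in> box n p. P (Amat n y z)})"
  proof (rule card_SigmaI)
    show "finite (box (n*(n-1)) p)" by simp
    show "\<forall>a\<in>box (n*(n-1)) p. finite {z \<in> box n p. P (Amat n a z)}" by simp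
  qed
  finally show ?thesis .
qed

lemma cp0_det:
  assumes A: "(A :: int mat) \<in> carrier_mat n n"
  shows "coeff (char_poly A) 0 = (-1)^n * det A"
proof -
  have "poly (det (char_poly_matrix A)) 0 = det ((-1) \<cdot>\<^sub>m A)"
  proof (rule poly_det_cong)
    show "(-1) \<cdot>\<^sub>m A \<in> carrier_mat n n" using A by simp
    show "char_poly_matrix A \<in> carrier_mat n n" using A by simp
    fix i j assume "i < n" "j < n"
    then show "poly (char_poly_matrix A $$ (i, j)) 0 = ((-1) \<cdot>\<^sub>m A) $$ (i, j)"
      using A by (simp add: cpm_index[OF A])
  qed
  then show ?thesis using A by (simp add: char_poly_def poly_0_coeff_0)
qed

lemma mult_index_sum:
  assumes "A \<in> carrier_mat n n" "B \<in> carrier_mat n n" "j < n" "i < n"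
  shows "(A * B) $$ (j,i) = (\<Sum>k<n. A $$ (j,k) * B $$ (k,i))"
  using assms by (simp add: scalar_prod_def atLeast0LessThan)

lemma good_fiber_inj:
  assumes p: "prime p" and n: "n \<ge> 2" and L: "\<not> int p dvd det (Lm n y)"
  shows "inj_on (\<lambda>z. (\<lambda>k\<in>{..<n}. coeff (char_poly (Amat n y z)) k mod int p)) (box n p)"
proof (rule inj_onI)
  fix z z' assume z: "z \<in> box n p" and z': "z' \<in> box n p"
    and e: "(\<lambda>k\<in>{..<n}. coeff (char_poly (Amat n y z)) k mod int p) = (\<lambda>k\<in>{..<n}. coeff (char_poly (Amat n y z')) k mod int p)"
  have n0: "n > 0" using n by simp
  let ?L = "Lm n y"
  have Lc: "?L \<in> carrier_mat n n" by (simp add: Lm_def)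
  have Li: "?L $$ (k,i) = coeff (Pc n y i) k" if "k < n" "i < n" for k i using that by (simp add: Lm_def)
  define w where "w i = z i - z' i" for i
  have R: "int p dvd (\<Sum>i<n. ?L $$ (k,i) * w i)" if k: "k < n" for k
  proof -
    have "coeff (char_poly (Amat n y z)) k mod int p = coeff (char_poly (Amat n y z')) k mod int p"
      using fun_cong[OF e, of k] k by simp
    then have "int p dvd coeff (char_poly (Amat n y z)) k - coeff (char_poly (Amat n y z')) k"
      by (simp add: mod_eq_dvd_iff)
    moreover have "coeff (char_poly (Amat n y z)) k - coeff (char_poly (Amat n y z')) k = - (\<Sum>i<n. ?L $$ (k,i) * w i)"
    proof -
      have "(\<Sum>i<n. ?L $$ (k,i) * w i) = (\<Sum>i<n. z i * coeff (Pc n y i) k) - (\<Sum>i<n. z' i * coeff (Pc n y i) k)"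
        unfolding sum_subtractf[symmetric] by (rule sum.cong) (auto simp: Li k w_def algebra_simps)
      then show ?thesis unfolding cp_coeff_expand[OF n0] by simp
    qed
    ultimately show ?thesis by simp
  qed
  have key: "det ?L * w j = (\<Sum>k<n. adj_mat ?L $$ (j,k) * (\<Sum>i<n. ?L $$ (k,i) * w i))" if j: "j < n" for j
  proof -
    have "(\<Sum>k<n. adj_mat ?L $$ (j,k) * (\<Sum>i<n. ?L $$ (k,i) * w i)) = (\<Sum>k<n. \<Sum>i<n. adj_mat ?L $$ (j,k) * ?L $$ (k,i) * w i)"
      by (simp add: sum_distrib_left mult.assoc)
    also have "\<dots> = (\<Sum>i<n. \<Sum>k<n. adj_mat ?L $$ (j,k) * ?L $$ (k,i) * w i)"
      by (rule sum.swap)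
    also have "\<dots> = (\<Sum>i<n. (\<Sum>k<n. adj_mat ?L $$ (j,k) * ?L $$ (k,i)) * w i)"
      by (simp add: sum_distrib_right)
    also have "\<dots> = (\<Sum>i<n. (adj_mat ?L * ?L) $$ (j,i) * w i)"
      by (rule sum.cong[OF refl]) (simp add: mult_index_sum[OF adj_mat(1)[OF Lc] Lc j])
    also have "\<dots> = (\<Sum>i<n. (if i = j then det ?L * w j else 0))"
      by (rule sum.cong[OF refl]) (use j in \<open>auto simp: adj_mat(3)[OF Lc]\<close>)
    also have "\<dots> = det ?L * w j" using j by simp
    finally show ?thesis by simp
  qed
  have pp: "prime (int p)" using p by simp
  show "z = z'"
  proof
    fix j show "z j = z' j"
    proof (cases "j < n")
      case True
      have "int p dvd det ?L * w j" unfolding key[OF True]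
        by (intro dvd_sum dvd_mult R) auto
      then have "int p dvd w j" using L pp by (simp add: prime_dvd_mult_iff)
      then show ?thesis using eq_of_dvd_range box_range[OF z True] box_range[OF z' True] unfolding w_def by auto
    next
      case False then show ?thesis using z z' by (simp add: box_def PiE_def extensional_def)
    qed
  qed
qed

lemma good_fiber_img:
  assumes p: "prime p" and n: "n \<ge> 2" and z: "z \<in> box n p" and X: "Amat n y z \<in> X_p n p"
  shows "(\<lambda>k\<in>{..<n}. coeff (char_poly (Amat n y z)) k mod int p) \<in> Sgood n p"
proof -
  let ?A = "Amat n y z"
  let ?c = "\<lambda>k\<in>{..<n}. coeff (char_poly ?A) k mod int p"
  have p0: "int p > 0" using prime_gt_0_nat[OF p] by simp
  have SL: "[det ?A = 1] (mod int p)" using X by (simp add: X_p_def SL_Fp_def)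
  obtain q where q: "lead_coeff q = 1" "1 \<le> degree q" "degree q \<le> n - 1" "coeff q 0 = 1"
    and dq: "dvd_mod_p p q (char_poly ?A)" using X unfolding X_p_def by blast
  obtain r where r: "\<And>i. [coeff (char_poly ?A) i = coeff (q * r) i] (mod int p)"
    using dq unfolding dvd_mod_p_def by blast
  have cb: "?c \<in> box n p" unfolding box_def restrict_PiE_iff using p0 by simp
  have dm: "degree (char_poly ?A) = n" "coeff (char_poly ?A) n = 1"
    using degree_monic_char_poly[OF Amat_carrier[of n y z]] by auto
  have c0: "?c 0 = ((-1)^n) mod int p"
  proof -
    have "[(-1)^n * det ?A = (-1)^n * 1] (mod int p)" by (intro cong_mult cong_refl SL)
    then have "((-1)^n * det ?A) mod int p = ((-1)^n) mod int p" by (simp add: cong_def)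
    then show ?thesis using n by (simp add: cp0_det[OF Amat_carrier])
  qed
  have pc: "[coeff (polyc n ?c) i = coeff (char_poly ?A) i] (mod int p)" for i
  proof (cases "i < n")
    case True then show ?thesis by (simp add: coeff_polyc cong_def)
  next
    case False
    show ?thesis
    proof (cases "i = n")
      case True then show ?thesis using dm by (simp add: coeff_polyc)
    next
      case False
      then have "i > n" using \<open>\<not> i < n\<close> by simp
      then have "coeff (char_poly ?A) i = 0" using dm by (simp add: coeff_eq_0)
      then show ?thesis using \<open>i > n\<close> by (simp add: coeff_polyc)
    qed
  qed
  have "\<forall>i. [coeff (polyc n ?c) i = coeff (q * r) i] (mod int p)"
    using pc r cong_trans by blast
  then show ?thesis unfolding Sgood_def using cb c0 q by blast
qed

lemma good_fiber:
  assumes p: "prime p" and n: "n \<ge> 2" and L: "\<not> int p dvd det (Lm n y)"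
  shows "card {z \<in> box n p. Amat n y z \<in> X_p n p} \<le> card (Sgood n p)"
proof (rule card_inj_on_le)
  show "inj_on (\<lambda>z. (\<lambda>k\<in>{..<n}. coeff (char_poly (Amat n y z)) k mod int p)) {z \<in> box n p. Amat n y z \<in> X_p n p}"
    by (rule inj_on_subset[OF good_fiber_inj[OF p n L]]) auto
  show "(\<lambda>z. (\<lambda>k\<in>{..<n}. coeff (char_poly (Amat n y z)) k mod int p)) ` {z \<in> box n p. Amat n y z \<in> X_p n p} \<subseteq> Sgood n p"
    using good_fiber_img[OF p n] by auto
  show "finite (Sgood n p)" by (rule finite_subset[of _ "box n p"]) (auto simp: Sgood_def)
qed

lemma bad_fiber:
  assumes p: "prime p" and n: "n \<ge> 2"
  shows "card {z \<in> box n p. Amat n y z \<in> X_p n p} \<le> p ^ (n-1)"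
proof -
  have n0: "n > 0" using n by simp
  have "card {z \<in> box n p. Amat n y z \<in> X_p n p} \<le> card {z \<in> box n p. [(\<Sum>i<n. z i * Dc n y i) = 1] (mod int p)}"
  proof (rule card_mono)
    show "finite {z \<in> box n p. [(\<Sum>i<n. z i * Dc n y i) = 1] (mod int p)}" by simp
    show "{z \<in> box n p. Amat n y z \<in> X_p n p} \<subseteq> {z \<in> box n p. [(\<Sum>i<n. z i * Dc n y i) = 1] (mod int p)}"
      using det_expand[OF n0] by (auto simp: X_p_def SL_Fp_def)
  qed
  also have "\<dots> \<le> p ^ (n-1)" by (rule hyper_upper[OF p n0])
  finally show ?thesis .
qed

lemma sum_if_le:
  fixes f :: "'a \<Rightarrow> nat"
  assumes "finite A" "\<And>y. y \<in> A \<Longrightarrow> f y \<le> (if P y then a else b)"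
  shows "sum f A \<le> a * card {y \<in> A. P y} + b * card A"
proof -
  have "sum f A \<le> (\<Sum>y\<in>A. a * (if P y then 1 else 0) + b)"
    by (rule sum_mono) (use assms(2) in \<open>force split: if_splits\<close>)
  also have "\<dots> = a * (\<Sum>y\<in>A. (if P y then 1 else 0)) + b * card A"
    by (simp add: sum.distrib sum_distrib_left)
  also have "(\<Sum>y\<in>A. (if P y then 1 else 0)) = card {y \<in> A. P y}"
    using sum.inter_filter[OF assms(1), of "\<lambda>_. (1::nat)" P] by simp
  finally show ?thesis .
qed

lemma sum_if_ge:
  fixes f :: "'a \<Rightarrow> nat"
  assumes "finite A" "\<And>y. y \<in> A \<Longrightarrow> P y \<Longrightarrow> a \<le> f y"
  shows "a * card {y \<in> A. P y} \<le> sum f A"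
proof -
  have "a * card {y \<in> A. P y} = (\<Sum>y\<in>{y \<in> A. P y}. a)" by simp
  also have "\<dots> \<le> (\<Sum>y\<in>{y \<in> A. P y}. f y)" by (rule sum_mono) (use assms(2) in auto)
  also have "\<dots> \<le> sum f A" by (rule sum_mono2) (use assms(1) in auto)
  finally show ?thesis .
qed

lemma card_split_pred:
  assumes "finite A"
  shows "card {y \<in> A. P y} + card {y \<in> A. \<not> P y} = card A"
proof -
  have "A = {y \<in> A. P y} \<union> {y \<in> A. \<not> P y}" by auto
  moreover have "card ({y \<in> A. P y} \<union> {y \<in> A. \<not> P y}) = card {y \<in> A. P y} + card {y \<in> A. \<not> P y}"
    by (rule card_Un_disjoint) (use assms in auto)
  ultimately show ?thesis by simp
qed

lemma X_bound:
  assumes p: "prime p" and n: "n \<ge> 2"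
  shows "card (X_p n p) * p \<le> ((n-1) + n*(n-1)) * (p ^ (n*(n-1)) * p ^ (n-1))"
proof -
  let ?M = "n*(n-1)"
  let ?B = "{y \<in> box ?M p. int p dvd det (Lm n y)}"
  have p1: "int p > 1" using prime_gt_1_nat[OF p] by simp
  have SZB: "card ?B * p \<le> (n*(n-1)) * p ^ ?M"
  proof (rule SZ[OF pdeg_Lm_det p y0w_box[OF p]])
    have pp: "prime (int p)" using p by simp
    have "\<not> int p dvd 1" using not_prime_unit[of "int p"] pp by blast
    then show "\<not> int p dvd det (Lm n (y0w n))" using det_Lm_y0[OF n] by simp
  qed
  have XS: "X_p n p = {A \<in> Fp_mats n p. A \<in> X_p n p}" by (auto simp: X_p_def SL_Fp_def)
  have "card (X_p n p) = (\<Sum>y\<in>box ?M p. card {z \<in> box n p. Amat n y z \<in> X_p n p})"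
    by (subst XS) (rule card_Fp_split[OF n])
  also have "\<dots> \<le> p ^ (n-1) * card ?B + card (Sgood n p) * card (box ?M p)"
  proof (rule sum_if_le)
    fix y assume "y \<in> box ?M p"
    show "card {z \<in> box n p. Amat n y z \<in> X_p n p} \<le> (if int p dvd det (Lm n y) then p ^ (n-1) else card (Sgood n p))"
      using bad_fiber[OF p n] good_fiber[OF p n] by simp
  qed simp
  also have "\<dots> \<le> p ^ (n-1) * card ?B + ((n-1) * p ^ (n-2)) * p ^ ?M"
    using card_Sgood[OF p n] by (simp add: card_box)
  finally have c: "card (X_p n p) \<le> p ^ (n-1) * card ?B + ((n-1) * p ^ (n-2)) * p ^ ?M" .
  have pp: "p ^ (n-2) * p = p ^ (n-1)"
  proof -
    have "n - 1 = Suc (n-2)" using n by simp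
    then show ?thesis by (simp add: power_Suc2)
  qed
  have "card (X_p n p) * p \<le> (p ^ (n-1) * card ?B + ((n-1) * p ^ (n-2)) * p ^ ?M) * p"
    using c by simp
  also have "\<dots> = p ^ (n-1) * (card ?B * p) + (n-1) * (p ^ (n-2) * p) * p ^ ?M"
    by (simp add: algebra_simps)
  also have "\<dots> \<le> p ^ (n-1) * ((n*(n-1)) * p ^ ?M) + (n-1) * (p ^ (n-2) * p) * p ^ ?M"
    using SZB by simp
  also have "\<dots> = ((n-1) + n*(n-1)) * (p ^ ?M * p ^ (n-1))"
    unfolding pp by (simp add: algebra_simps)
  finally show ?thesis .
qed

lemma SL_bound:
  assumes p: "prime p" and n: "n \<ge> 2"
  shows "(real p - real (n-1)) * (real p ^ (n*(n-1)) * real p ^ (n-1)) \<le> real (card (SL_Fp n p)) * real p"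
proof -
  let ?M = "n*(n-1)"
  let ?B = "{y \<in> box ?M p. int p dvd Dc n y (n-1)}"
  let ?G = "{y \<in> box ?M p. \<not> int p dvd Dc n y (n-1)}"
  have n0: "n > 0" using n by simp
  have p1: "int p > 1" using prime_gt_1_nat[OF p] by simp
  have SZB: "card ?B * p \<le> (n-1) * p ^ ?M"
  proof (rule SZ[OF pdeg_Dc p y1w_box[OF p]])
    have pp: "prime (int p)" using p by simp
    have "\<not> int p dvd 1" using not_prime_unit[of "int p"] pp by blast
    then show "\<not> int p dvd Dc n (y1w n) (n-1)" using Dc_y1[OF n] by simp
  qed
  have part: "card ?B + card ?G = p ^ ?M" using card_split_pred[of "box ?M p"] by (simp add: card_box)
  have SLS: "SL_Fp n p = {A \<in> Fp_mats n p. [det A = 1] (mod int p)}" by (simp add: SL_Fp_def)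
  have "card (SL_Fp n p) = (\<Sum>y\<in>box ?M p. card {z \<in> box n p. [det (Amat n y z) = 1] (mod int p)})"
    by (subst SLS) (rule card_Fp_split[OF n])
  also have "\<dots> = (\<Sum>y\<in>box ?M p. card {z \<in> box n p. [(\<Sum>i<n. z i * Dc n y i) = 1] (mod int p)})"
    by (simp add: det_expand[OF n0])
  finally have e: "card (SL_Fp n p) = (\<Sum>y\<in>box ?M p. card {z \<in> box n p. [(\<Sum>i<n. z i * Dc n y i) = 1] (mod int p)})" .
  have "p ^ (n-1) * card ?G \<le> card (SL_Fp n p)"
    unfolding e by (rule sum_if_ge) (use hyper_lower[OF p n0] in auto)
  then have "real (p ^ (n-1) * card ?G) \<le> real (card (SL_Fp n p))" by (rule of_nat_mono)
  then have r1: "real p ^ (n-1) * real (card ?G) \<le> real (card (SL_Fp n p))" by simp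
  have "real (card ?B * p) \<le> real ((n-1) * p ^ ?M)" using SZB by (rule of_nat_mono)
  then have r2: "real (card ?B) * real p \<le> real (n-1) * real p ^ ?M" by simp
  have "real (card ?B + card ?G) = real (p ^ ?M)" using part by simp
  then have r3: "real (card ?G) = real p ^ ?M - real (card ?B)" by simp
  have pge: "real p \<ge> 0" by simp
  have "(real p - real (n-1)) * (real p ^ ?M * real p ^ (n-1))
      = real p ^ (n-1) * (real p ^ ?M * real p - real (n-1) * real p ^ ?M)"
    by (simp add: algebra_simps)
  also have "\<dots> \<le> real p ^ (n-1) * (real p ^ ?M * real p - real (card ?B) * real p)"
    by (rule mult_left_mono) (use r2 in simp_all)
  also have "\<dots> = real p ^ (n-1) * real (card ?G) * real p"
    unfolding r3 by (simp add: algebra_simps)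
  also have "\<dots> \<le> real (card (SL_Fp n p)) * real p"
    by (rule mult_right_mono[OF r1 pge])
  finally show ?thesis .
qed

theorem corollary6p2:
  fixes n :: nat
  assumes "n \<ge> 2"
  shows "((\<lambda>p. real (card (X_p n p)) / real (card (SL_Fp n p))) \<longlongrightarrow> 0)
           (inf at_top (principal {p. prime p}))"
proof -
  have n: "n \<ge> 2" by (rule assms)
  define K where "K = real ((n-1) + n*(n-1))"
  define c where "c = real (n-1)"
  let ?F = "inf at_top (principal {p::nat. prime p})"
  let ?r = "\<lambda>p. real (card (X_p n p)) / real (card (SL_Fp n p))"
  let ?h = "\<lambda>p::nat. K / (real p - c)"
  have bound: "?r p \<le> ?h p" if p: "prime p" and pn: "p > n" for p
  proof -
    let ?E = "real p ^ (n*(n-1)) * real p ^ (n-1)"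
    define X where "X = real (card (X_p n p))"
    define S where "S = real (card (SL_Fp n p))"
    define P where "P = real p"
    have P0: "P > 0" unfolding P_def using pn by simp
    have E0: "?E > 0" using pn by simp
    have D0: "P - c > 0" unfolding P_def c_def using pn by simp
    have hX: "X * P \<le> K * ?E"
    proof -
      have "real (card (X_p n p) * p) \<le> real (((n-1) + n*(n-1)) * (p ^ (n*(n-1)) * p ^ (n-1)))"
        using X_bound[OF p n] by (rule of_nat_mono)
      then show ?thesis unfolding X_def P_def K_def by simp
    qed
    have hS: "(P - c) * ?E \<le> S * P" unfolding S_def P_def c_def using SL_bound[OF p n] by simp
    have S0: "S > 0"
    proof -
      have "0 < (P - c) * ?E" using D0 E0 by simp
      then have "0 < S * P" using hS by linarith
      then show ?thesis using P0 by (simp add: zero_less_mult_iff)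
    qed
    have "X * (P - c) * P \<le> K * S * P"
    proof -
      have "X * (P - c) * P = (X * P) * (P - c)" by (simp add: algebra_simps)
      also have "\<dots> \<le> (K * ?E) * (P - c)" by (rule mult_right_mono[OF hX]) (use D0 in simp)
      also have "\<dots> = K * ((P - c) * ?E)" by (simp add: algebra_simps)
      also have "\<dots> \<le> K * (S * P)" by (rule mult_left_mono[OF hS]) (simp add: K_def)
      finally show ?thesis by (simp add: algebra_simps)
    qed
    then have "X * (P - c) \<le> K * S" using P0 by simp
    then have "X / S \<le> K / (P - c)" using S0 D0 by (simp add: field_simps)
    then show ?thesis unfolding X_def S_def P_def by simp
  qed
  have lim: "(?h \<longlongrightarrow> 0) at_top"
  proof (rule tendsto_divide_0[OF tendsto_const])
    have "LIM p at_top. (- c) + real p :> at_top"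
      by (rule filterlim_tendsto_add_at_top[OF tendsto_const filterlim_real_sequentially])
    then have "LIM p at_top. real p - c :> at_top" by simp
    then show "LIM p at_top. real p - c :> at_infinity" by (rule filterlim_at_top_imp_at_infinity)
  qed
  show ?thesis
  proof (rule tendsto_sandwich[where f="\<lambda>_. 0" and h="?h"])
    show "\<forall>\<^sub>F p in ?F. 0 \<le> ?r p" by simp
    show "\<forall>\<^sub>F p in ?F. ?r p \<le> ?h p"
      unfolding eventually_inf_principal
      using eventually_gt_at_top[of n] by eventually_elim (use bound in auto)
    show "((\<lambda>_. 0) \<longlongrightarrow> (0::real)) ?F" by simp
    show "(?h \<longlongrightarrow> 0) ?F" by (rule tendsto_mono[OF inf_le1 lim])
  qed
qed

end
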